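(* In the setting of the context with $\lambda_n^2=\tilde{\beta}_n$ for all $n$, the optimal reverse variance satisfies $$\tilde{\beta}_n\le\sigma_n^{*2}\le\frac{\beta_n}{\alpha_n}.$$ If moreover $q(\mathbf{x}_0)$ is supported in $[a,b]^d$, then $$\sigma_n^{*2}\le\tilde{\beta}_n+\frac{\overline{\alpha}_{n-1}\beta_n^2}{\overline{\beta}_n^2}\Big(\frac{b-a}{2}\Big)^2.$$
   Context: Let $d,N\ge1$, $\beta_1,\dots,\beta_N\in(0,1)$, $\alpha_n=1-\beta_n$, $\overline{\alpha}_n=\prod_{i\le n}\alpha_i$, $\overline{\beta}_n=1-\overline{\alpha}_n$, $\overline{\alpha}_0:=1$, $\overline{\beta}_0:=0$, $\tilde{\beta}_n:=\frac{\overline{\beta}_{n-1}}{\overline{\beta}_n}\beta_n$. Let $q(\mathbf{x}_0)$ be a probability density on $\mathbb{R}^d$ with finite second moments. With $\lambda_n^2=\tilde{\beta}_n$, define $\tilde{\boldsymbol{\mu}}_n(\mathbf{x}_n,\mathbf{x}_0)=\sqrt{\overline{\alpha}_{n-1}}\mathbf{x}_0+\sqrt{\overline{\beta}_{n-1}-\lambda_n^2}\frac{\mathbf{x}_n-\sqrt{\overline{\alpha}_n}\mathbf{x}_0}{\sqrt{\overline{\beta}_n}}$ and the forward process $q(\mathbf{x}_{0:N})=q(\mathbf{x}_0)q(\mathbf{x}_N|\mathbf{x}_0)\prod_{n=2}^Nq(\mathbf{x}_{n-1}|\mathbf{x}_n,\mathbf{x}_0)$ with $q(\mathbf{x}_N|\mathbf{x}_0)=\mathcal{N}(\sqrt{\overline{\alpha}_N}\mathbf{x}_0,\overline{\beta}_N\mathbf{I})$,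 $q(\mathbf{x}_{n-1}|\mathbf{x}_n,\mathbf{x}_0)=\mathcal{N}(\tilde{\boldsymbol{\mu}}_n(\mathbf{x}_n,\mathbf{x}_0),\lambda_n^2\mathbf{I})$. The optimal reverse variance $\sigma_n^{*2}$ is the variance in a minimizer of $D_{\mathrm{KL}}(q(\mathbf{x}_{0:N})\|p(\mathbf{x}_{0:N}))$ over reverse models $p(\mathbf{x}_{0:N})=\mathcal{N}(\mathbf{x}_N|\mathbf{0},\mathbf{I})\prod_{n=1}^N\mathcal{N}(\mathbf{x}_{n-1}|\boldsymbol{\mu}_n(\mathbf{x}_n),\sigma_n^2\mathbf{I})$; it equals $\mathbb{E}_{q_n(\mathbf{x}_n)}\mathrm{tr}(\mathrm{Cov}_{q(\mathbf{x}_{n-1}|\mathbf{x}_n)}[\mathbf{x}_{n-1}])/d$. *)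

theory Defs
  imports "HOL-Analysis.Analysis"
begin

text \<open>Noise schedule. beta is indexed by n = 1..N.\<close>

definition alpha :: "(nat \<Rightarrow> real) \<Rightarrow> nat \<Rightarrow> real" where
  "alpha \<beta> n = 1 - \<beta> n"

definition abar :: "(nat \<Rightarrow> real) \<Rightarrow> nat \<Rightarrow> real" where
  "abar \<beta> n = (\<Prod>i\<in>{1..n}. alpha \<beta> i)"

definition bbar :: "(nat \<Rightarrow> real) \<Rightarrow> nat \<Rightarrow> real" where
  "bbar \<beta> n = 1 - abar \<beta> n"

definition btil :: "(nat \<Rightarrow> real) \<Rightarrow> nat \<Rightarrow> real" where
  "btil \<beta> n = bbar \<beta> (n - 1) / bbar \<beta> n * \<beta> n"

definition gauss_dens :: "real^'d \<Rightarrow> real \<Rightarrow> real^'d \<Rightarrow> real" where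
  "gauss_dens m s x =
     (2 * pi * s) powr (- real CARD('d) / 2) * exp (- (norm (x - m))\<^sup>2 / (2 * s))"

text \<open>Posterior mean tilde mu_n(x_n, x_0) with lambda_n^2 = btil n.\<close>

definition mu_til :: "(nat \<Rightarrow> real) \<Rightarrow> nat \<Rightarrow> real^'d \<Rightarrow> real^'d \<Rightarrow> real^'d" where
  "mu_til \<beta> n x x0 =
     sqrt (abar \<beta> (n - 1)) *\<^sub>R x0
     + (sqrt (bbar \<beta> (n - 1) - btil \<beta> n) / sqrt (bbar \<beta> n)) *\<^sub>R (x - sqrt (abar \<beta> n) *\<^sub>R x0)"

text \<open>Marginal conditional density q(x_n | x_0) of the forward process
  q(x_{1:N}|x_0) = q(x_N|x_0) prod_{n=2}^N q(x_{n-1}|x_n,x_0),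
  computed by integrating out x_N, ..., x_{n+1}; the argument k counts steps from N,
  i.e. fwd_cond_aux beta N k is the density of x_{N-k} given x_0.\<close>

fun fwd_cond_aux :: "(nat \<Rightarrow> real) \<Rightarrow> nat \<Rightarrow> nat \<Rightarrow> real^'d \<Rightarrow> real^'d \<Rightarrow> real" where
  "fwd_cond_aux \<beta> N 0 x0 x = gauss_dens (sqrt (abar \<beta> N) *\<^sub>R x0) (bbar \<beta> N) x"
| "fwd_cond_aux \<beta> N (Suc k) x0 y =
     (\<integral>x. fwd_cond_aux \<beta> N k x0 x * gauss_dens (mu_til \<beta> (N - k) x x0) (btil \<beta> (N - k)) y \<partial>lborel)"

definition fwd_cond :: "(nat \<Rightarrow> real) \<Rightarrow> nat \<Rightarrow> nat \<Rightarrow> real^'d \<Rightarrow> real^'d \<Rightarrow> real" where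
  "fwd_cond \<beta> N n x0 x = fwd_cond_aux \<beta> N (N - n) x0 x"

definition marg :: "(real^'d \<Rightarrow> real) \<Rightarrow> (nat \<Rightarrow> real) \<Rightarrow> nat \<Rightarrow> nat \<Rightarrow> real^'d \<Rightarrow> real" where
  "marg q \<beta> N n x = (\<integral>x0. q x0 * fwd_cond \<beta> N n x0 x \<partial>lborel)"

text \<open>Joint density q(x_{n-1} = y, x_n = x). For n = 1, x_{n-1} = x_0.\<close>

definition joint :: "(real^'d \<Rightarrow> real) \<Rightarrow> (nat \<Rightarrow> real) \<Rightarrow> nat \<Rightarrow> nat \<Rightarrow> real^'d \<Rightarrow> real^'d \<Rightarrow> real" where
  "joint q \<beta> N n y x =
     (if n = 1 then q y * fwd_cond \<beta> N 1 y x
      else (\<integral>x0. q x0 * fwd_cond \<beta> N n x0 x * gauss_dens (mu_til \<beta> n x x0) (btil \<beta> n) y \<partial>lborel))"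

definition rev_cond :: "(real^'d \<Rightarrow> real) \<Rightarrow> (nat \<Rightarrow> real) \<Rightarrow> nat \<Rightarrow> nat \<Rightarrow> real^'d \<Rightarrow> real^'d \<Rightarrow> real" where
  "rev_cond q \<beta> N n x y = joint q \<beta> N n y x / marg q \<beta> N n x"

definition rev_mean :: "(real^'d \<Rightarrow> real) \<Rightarrow> (nat \<Rightarrow> real) \<Rightarrow> nat \<Rightarrow> nat \<Rightarrow> real^'d \<Rightarrow> real^'d" where
  "rev_mean q \<beta> N n x = (\<chi> i. \<integral>y. rev_cond q \<beta> N n x y * y $ i \<partial>lborel)"

definition rev_cov_tr :: "(real^'d \<Rightarrow> real) \<Rightarrow> (nat \<Rightarrow> real) \<Rightarrow> nat \<Rightarrow> nat \<Rightarrow> real^'d \<Rightarrow> real" where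
  "rev_cov_tr q \<beta> N n x =
     (\<Sum>i\<in>UNIV. \<integral>y. rev_cond q \<beta> N n x y * (y $ i - rev_mean q \<beta> N n x $ i)\<^sup>2 \<partial>lborel)"

definition sigma_opt :: "(real^'d \<Rightarrow> real) \<Rightarrow> (nat \<Rightarrow> real) \<Rightarrow> nat \<Rightarrow> nat \<Rightarrow> real" where
  "sigma_opt q \<beta> N n =
     (\<integral>x. marg q \<beta> N n x * rev_cov_tr q \<beta> N n x \<partial>lborel) / real CARD('d)"

end

theory Submission
  imports Defs "HOL-Probability.Probability"
begin


lemma Basis_vec_real: "(Basis :: (real^'d) set) = range (\<lambda>j. axis j 1)"
  by (auto simp: Basis_vec_def)

lemma inj_axis1: "inj (\<lambda>j::'d::finite. axis j (1::real))"
  by (auto intro!: injI simp: axis_eq_axis)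

lemma prod_Basis_vec: "(\<Prod>b\<in>(Basis :: (real^'d) set). g b) = (\<Prod>j\<in>UNIV. g (axis j 1))"
  unfolding Basis_vec_real by (subst prod.reindex[OF inj_axis1]) simp

lemma nn_integral_vec_prod:
  fixes f :: "'d::finite \<Rightarrow> real \<Rightarrow> real"
  assumes [measurable]: "\<And>j. f j \<in> borel_measurable borel" and nn: "\<And>j t. 0 \<le> f j t"
  shows "(\<integral>\<^sup>+y. ennreal (\<Prod>j\<in>UNIV. f j (y$j)) \<partial>(lborel::(real^'d) measure))
       = (\<Prod>j\<in>UNIV. \<integral>\<^sup>+t. ennreal (f j t) \<partial>lborel)"
proof -
  define idx where "idx b = (SOME j. b = axis j (1::real))" for b :: "real^'d"
  have idx: "idx (axis j 1) = j" for j
    unfolding idx_def by (rule some_equality) (auto simp: axis_eq_axis)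
  define g where "g b t = ennreal (f (idx b) t)" for b :: "real^'d" and t
  have "(\<integral>\<^sup>+y. (\<Prod>b\<in>Basis. g b (y \<bullet> b)) \<partial>(lborel::(real^'d) measure)) = (\<Prod>b\<in>Basis. (\<integral>\<^sup>+t. g b t \<partial>lborel))"
    by (rule nn_integral_lborel_prod) (auto simp: g_def)
  moreover have "(\<Prod>b\<in>Basis. g b (y \<bullet> b)) = ennreal (\<Prod>j\<in>UNIV. f j (y$j))" for y :: "real^'d"
    by (simp add: prod_Basis_vec g_def idx inner_axis prod_ennreal nn)
  moreover have "(\<Prod>b\<in>(Basis::(real^'d) set). (\<integral>\<^sup>+t. g b t \<partial>lborel)) = (\<Prod>j\<in>UNIV. \<integral>\<^sup>+t. ennreal (f j t) \<partial>lborel)"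
    by (simp add: prod_Basis_vec g_def idx)
  ultimately show ?thesis by simp
qed

lemma norm_sq_vec: "(norm (x :: real^'d))\<^sup>2 = (\<Sum>j\<in>UNIV. (x$j)\<^sup>2)"
  unfolding power2_norm_eq_inner inner_vec_def by (simp add: power2_eq_square)

lemma gauss_dens_prod:
  assumes s: "0 < s"
  shows "gauss_dens m s (y::real^'d) = (\<Prod>j\<in>UNIV. normal_density (m$j) (sqrt s) (y$j))"
proof -
  have "(2 * pi * s) powr (- real CARD('d) / 2) = (1 / sqrt (2 * pi * s)) ^ CARD('d)"
  proof -
    have c: "0 < 2 * pi * s" using s by simp
    have "(2 * pi * s) powr (- real CARD('d) / 2) = 1 / ((2 * pi * s) powr (real CARD('d) / 2))"
      by (simp add: powr_minus_divide[symmetric])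
    also have "\<dots> = 1 / sqrt ((2 * pi * s) ^ CARD('d))"
      using c by (simp add: powr_half_sqrt_powr powr_realpow)
    also have "\<dots> = (1 / sqrt (2 * pi * s)) ^ CARD('d)"
      by (simp add: real_sqrt_power power_one_over)
    finally show ?thesis .
  qed
  moreover have "exp (- (norm (y - m))\<^sup>2 / (2 * s)) = (\<Prod>j\<in>UNIV. exp (- (y $ j - m $ j)\<^sup>2 / (2 * s)))"
    by (simp add: norm_sq_vec exp_sum[symmetric] sum_divide_distrib[symmetric] sum_negf)
  ultimately show ?thesis
    using s by (simp add: gauss_dens_def normal_density_def prod.distrib power2_eq_square[of "sqrt s"] power2_commute
       prod_dividef power_one_over)
qed

lemma nd_moment:
  assumes s: "0 < \<sigma>"
  shows "(\<integral>\<^sup>+t. ennreal (normal_density \<mu> \<sigma> t * (A*t+B)\<^sup>2) \<partial>lborel) = ennreal (A\<^sup>2*\<sigma>\<^sup>2 + (A*\<mu>+B)\<^sup>2)"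
proof -
  have e2: "has_bochner_integral lborel (\<lambda>t. normal_density \<mu> \<sigma> t * (t - \<mu>)^2) (\<sigma>\<^sup>2)"
    using normal_moment_even[OF s, where k=1 and \<mu>=\<mu>] by (simp add: power2_eq_square)
  have e1: "has_bochner_integral lborel (\<lambda>t. normal_density \<mu> \<sigma> t * (t - \<mu>)) 0"
    using normal_moment_odd[OF s, where k=0 and \<mu>=\<mu>] by simp
  have e0: "has_bochner_integral lborel (\<lambda>t. normal_density \<mu> \<sigma> t) 1"
    using integrable_normal_density[OF s] integral_normal_density[OF s]
    by (simp add: has_bochner_integral_iff)
  have "has_bochner_integral lborel (\<lambda>t. A\<^sup>2 * (normal_density \<mu> \<sigma> t * (t - \<mu>)^2)
     + (2*A*(A*\<mu>+B)) * (normal_density \<mu> \<sigma> t * (t - \<mu>)) + (A*\<mu>+B)\<^sup>2 * normal_density \<mu> \<sigma> t)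
     (A\<^sup>2 * \<sigma>\<^sup>2 + (2*A*(A*\<mu>+B)) * 0 + (A*\<mu>+B)\<^sup>2 * 1)"
    by (intro has_bochner_integral_add has_bochner_integral_mult_right e0 e1 e2)
  then have h: "has_bochner_integral lborel (\<lambda>t. normal_density \<mu> \<sigma> t * (A*t+B)\<^sup>2) (A\<^sup>2*\<sigma>\<^sup>2 + (A*\<mu>+B)\<^sup>2)"
    by (rule has_bochner_integral_cong[THEN iffD1, rotated 3]) (auto simp: power2_eq_square algebra_simps)
  show ?thesis
    by (rule nn_integral_eq_integrable[THEN iffD2]) (use h in \<open>auto simp: has_bochner_integral_iff\<close>)
qed

lemma gauss_moment:
  assumes s: "0 < s"
  shows "(\<integral>\<^sup>+y. ennreal (gauss_dens m s (y::real^'d) * (A * y $ i + B)\<^sup>2) \<partial>lborel)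
     = ennreal (A\<^sup>2 * s + (A * m $ i + B)\<^sup>2)"
proof -
  define h where "h j t = (if j = i then normal_density (m $ j) (sqrt s) t * (A * t + B)\<^sup>2
     else normal_density (m $ j) (sqrt s) t)" for j t
  have h_meas: "h j \<in> borel_measurable borel" for j unfolding h_def by measurable
  have h_nn: "0 \<le> h j t" for j t unfolding h_def by auto
  have eq: "gauss_dens m s y * (A * y $ i + B)\<^sup>2 = (\<Prod>j\<in>UNIV. h j (y $ j))" for y :: "real^'d"
  proof -
    have "(\<Prod>j\<in>UNIV. h j (y $ j)) = h i (y $ i) * (\<Prod>j\<in>UNIV-{i}. h j (y $ j))"
      by (simp add: prod.remove)
    also have "(\<Prod>j\<in>UNIV-{i}. h j (y $ j)) = (\<Prod>j\<in>UNIV-{i}. normal_density (m $ j) (sqrt s) (y $ j))"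
      by (rule prod.cong) (auto simp: h_def)
    also have "h i (y $ i) = normal_density (m $ i) (sqrt s) (y $ i) * (A * y $ i + B)\<^sup>2"
      by (simp add: h_def)
    also have "gauss_dens m s y = normal_density (m $ i) (sqrt s) (y $ i) * (\<Prod>j\<in>UNIV-{i}. normal_density (m $ j) (sqrt s) (y $ j))"
      using s by (simp add: gauss_dens_prod prod.remove[where x=i])
    ultimately show ?thesis by (simp add: ac_simps)
  qed
  have one: "(\<integral>\<^sup>+t. ennreal (normal_density \<mu> (sqrt s) t) \<partial>lborel) = 1" for \<mu>
    using nd_moment[of "sqrt s" \<mu> 0 1] s by simp
  have "(\<integral>\<^sup>+y. ennreal (gauss_dens m s (y::real^'d) * (A * y $ i + B)\<^sup>2) \<partial>lborel)
     = (\<Prod>j\<in>UNIV. \<integral>\<^sup>+t. ennreal (h j t) \<partial>lborel)"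
    unfolding eq by (rule nn_integral_vec_prod[OF h_meas h_nn])
  also have "\<dots> = (\<integral>\<^sup>+t. ennreal (h i t) \<partial>lborel) * (\<Prod>j\<in>UNIV-{i}. \<integral>\<^sup>+t. ennreal (h j t) \<partial>lborel)"
    by (simp add: prod.remove)
  also have "(\<Prod>j\<in>UNIV-{i}. \<integral>\<^sup>+t. ennreal (h j t) \<partial>lborel) = 1"
    by (rule prod.neutral) (auto simp: h_def one)
  also have "(\<integral>\<^sup>+t. ennreal (h i t) \<partial>lborel) = ennreal (A\<^sup>2 * s + (A * m $ i + B)\<^sup>2)"
    using nd_moment[of "sqrt s" "m $ i" A B] s by (simp add: h_def)
  finally show ?thesis by simp
qed

lemma gauss_total: "0 < s \<Longrightarrow> (\<integral>\<^sup>+y. ennreal (gauss_dens m s (y::real^'d)) \<partial>lborel) = 1"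
  using gauss_moment[of s m 0 undefined 1] by simp

lemma gauss_nonneg: "0 \<le> gauss_dens m s y"
  by (simp add: gauss_dens_def)

lemma gauss_le: "0 < s \<Longrightarrow> gauss_dens m s y \<le> (2 * pi * s) powr (- real CARD('d) / 2)"
  for y :: "real^'d"
  by (simp add: gauss_dens_def)

lemma gauss_meas[measurable (raw)]:
  assumes [measurable]: "f \<in> borel_measurable M" "g \<in> borel_measurable M" "h \<in> borel_measurable M"
  shows "(\<lambda>x. gauss_dens (f x) (g x) (h x :: real^'d)) \<in> borel_measurable M"
  unfolding gauss_dens_def by measurable


locale sched =
  fixes \<beta> :: "nat \<Rightarrow> real" and N :: nat
  assumes hb: "\<And>k. k \<in> {1..N} \<Longrightarrow> 0 < \<beta> k \<and> \<beta> k < 1"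
begin

lemma alpha_pos: "1 \<le> n \<Longrightarrow> n \<le> N \<Longrightarrow> 0 < alpha \<beta> n \<and> alpha \<beta> n < 1"
  using hb[of n] by (auto simp: alpha_def)

lemma abar0[simp]: "abar \<beta> 0 = 1" by (simp add: abar_def)
lemma bbar0[simp]: "bbar \<beta> 0 = 0" by (simp add: bbar_def)

lemma abar_Suc: "abar \<beta> (Suc n) = abar \<beta> n * alpha \<beta> (Suc n)"
  by (simp add: abar_def prod.nat_ivl_Suc' mult.commute)

lemma abar_bounds: "n \<le> N \<Longrightarrow> 0 < abar \<beta> n \<and> abar \<beta> n \<le> 1 \<and> (1 \<le> n \<longrightarrow> abar \<beta> n < 1)"
proof (induction n)
  case 0 then show ?case by simp
next
  case (Suc n)
  then have a: "0 < alpha \<beta> (Suc n) \<and> alpha \<beta> (Suc n) < 1" using alpha_pos[of "Suc n"] by simp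
  from Suc have ih: "0 < abar \<beta> n \<and> abar \<beta> n \<le> 1" by simp
  have "abar \<beta> n * alpha \<beta> (Suc n) < 1"
    using a ih by (metis less_le_trans mult_less_cancel_left2 mult.commute mult_le_one less_imp_le
       mult_less_le_imp_less zero_less_one mult_1_right)
  then show ?case using a ih by (simp add: abar_Suc)
qed

lemma bbar_pos: "1 \<le> n \<Longrightarrow> n \<le> N \<Longrightarrow> 0 < bbar \<beta> n \<and> bbar \<beta> n < 1"
  using abar_bounds[of n] by (simp add: bbar_def)

lemma bbar_nn: "n \<le> N \<Longrightarrow> 0 \<le> bbar \<beta> n"
  using abar_bounds[of n] by (simp add: bbar_def)

lemma abar_n: "1 \<le> n \<Longrightarrow> abar \<beta> n = abar \<beta> (n - 1) * alpha \<beta> n"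
  using abar_Suc[of "n - 1"] by simp

lemma bbar_n: "1 \<le> n \<Longrightarrow> bbar \<beta> n = bbar \<beta> (n - 1) * alpha \<beta> n + \<beta> n"
  using abar_n[of n] by (simp add: bbar_def alpha_def algebra_simps)

lemma btil_key: "1 \<le> n \<Longrightarrow> n \<le> N \<Longrightarrow>
   bbar \<beta> (n - 1) - btil \<beta> n = alpha \<beta> n * (bbar \<beta> (n - 1))\<^sup>2 / bbar \<beta> n"
proof -
  assume n: "1 \<le> n" "n \<le> N"
  have b: "0 < bbar \<beta> n" using bbar_pos n by simp
  have e: "bbar \<beta> n = bbar \<beta> (n - 1) * alpha \<beta> n + \<beta> n" using bbar_n n by simp
  have "bbar \<beta> (n - 1) - btil \<beta> n = (bbar \<beta> (n - 1) * bbar \<beta> n - bbar \<beta> (n - 1) * \<beta> n) / bbar \<beta> n"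
    using b by (simp add: btil_def field_simps)
  also have "bbar \<beta> (n - 1) * bbar \<beta> n - bbar \<beta> (n - 1) * \<beta> n = alpha \<beta> n * (bbar \<beta> (n - 1))\<^sup>2"
    by (subst e) (simp add: algebra_simps power2_eq_square)
  finally show ?thesis .
qed

lemma btil_nn: "1 \<le> n \<Longrightarrow> n \<le> N \<Longrightarrow> 0 \<le> btil \<beta> n \<and> btil \<beta> n \<le> bbar \<beta> (n - 1)"
proof -
  assume n: "1 \<le> n" "n \<le> N"
  have b: "0 < bbar \<beta> n" using bbar_pos n by simp
  have B: "0 \<le> bbar \<beta> (n - 1)" using bbar_nn n by simp
  have a: "0 < alpha \<beta> n" "0 < \<beta> n" using alpha_pos hb n by auto
  have e: "bbar \<beta> n = bbar \<beta> (n - 1) * alpha \<beta> n + \<beta> n" using bbar_n n by simp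
  have le: "\<beta> n \<le> bbar \<beta> n" using e B a by simp
  have "bbar \<beta> (n - 1) * \<beta> n \<le> bbar \<beta> (n - 1) * bbar \<beta> n"
    using le B by (rule mult_left_mono)
  then show ?thesis using b B a by (simp add: btil_def divide_le_eq)
qed

lemma btil_pos: "2 \<le> n \<Longrightarrow> n \<le> N \<Longrightarrow> 0 < btil \<beta> n"
  using bbar_pos[of n] bbar_pos[of "n - 1"] hb[of n] by (simp add: btil_def)

end


lemma int_as_nn:
  fixes g :: "'a \<Rightarrow> real"
  assumes "g \<in> borel_measurable M" "\<And>x. 0 \<le> g x" "(\<integral>\<^sup>+x. ennreal (g x) \<partial>M) < \<infinity>"
  shows "ennreal (\<integral>x. g x \<partial>M) = (\<integral>\<^sup>+x. ennreal (g x) \<partial>M)"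
  using integral_eq_nn_integral[of g M] assms by (simp add: ennreal_enn2real)

lemma meas_nth[measurable (raw)]:
  "f \<in> borel_measurable M \<Longrightarrow> (\<lambda>x. (f x :: real^'n) $ i) \<in> borel_measurable M"
  using measurable_compose[OF _ borel_measurable_nth] by blast

lemma meas_raw:
  assumes "(\<lambda>p. F (fst p) (snd p)) \<in> borel_measurable (borel \<Otimes>\<^sub>M borel)"
    "g \<in> M \<rightarrow>\<^sub>M borel" "h \<in> M \<rightarrow>\<^sub>M borel"
  shows "(\<lambda>x. F (g x) (h x) :: real) \<in> borel_measurable M"
  using measurable_compose[OF measurable_Pair[OF assms(2,3)] assms(1)] by simp

context sched
begin

lemma mu_til_comp: "mu_til \<beta> n x x0 $ i = sqrt (abar \<beta> (n - 1)) * x0 $ i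
   + sqrt (bbar \<beta> (n - 1) - btil \<beta> n) / sqrt (bbar \<beta> n) * (x $ i - sqrt (abar \<beta> n) * x0 $ i)"
  by (simp add: mu_til_def)

lemma fwd_inv:
  "k < N \<Longrightarrow> (\<lambda>p. fwd_cond_aux \<beta> N k (fst p) (snd p :: real^'d)) \<in> borel_measurable (borel \<Otimes>\<^sub>M borel)
    \<and> (\<forall>x0 x. 0 \<le> fwd_cond_aux \<beta> N k x0 (x :: real^'d))
    \<and> (\<exists>C. \<forall>x0 x. fwd_cond_aux \<beta> N k x0 (x :: real^'d) \<le> C)
    \<and> (\<forall>x0 i A B. (\<integral>\<^sup>+x. ennreal (fwd_cond_aux \<beta> N k x0 (x :: real^'d) * (A * x $ i + B)\<^sup>2) \<partial>lborel)
         = ennreal (A\<^sup>2 * bbar \<beta> (N - k) + (A * sqrt (abar \<beta> (N - k)) * x0 $ i + B)\<^sup>2))"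
proof (induction k)
  case 0
  then have s: "0 < bbar \<beta> N" using bbar_pos[of N] by simp
  show ?case
  proof (intro conjI allI exI)
    show "(\<lambda>p. fwd_cond_aux \<beta> N 0 (fst p) (snd p :: real^'d)) \<in> borel_measurable (borel \<Otimes>\<^sub>M borel)"
      by (simp add: mu_til_def) measurable
  next
    fix x0 x :: "real^'d"
    show "0 \<le> fwd_cond_aux \<beta> N 0 x0 x" by (simp add: gauss_nonneg)
    show "fwd_cond_aux \<beta> N 0 x0 x \<le> (2 * pi * bbar \<beta> N) powr (- real CARD('d) / 2)"
      using gauss_le[OF s, of "sqrt (abar \<beta> N) *\<^sub>R x0" x] by simp
  next
    fix x0 :: "real^'d" and i A B
    show "(\<integral>\<^sup>+x. ennreal (fwd_cond_aux \<beta> N 0 x0 (x :: real^'d) * (A * x $ i + B)\<^sup>2) \<partial>lborel)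
         = ennreal (A\<^sup>2 * bbar \<beta> (N - 0) + (A * sqrt (abar \<beta> (N - 0)) * x0 $ i + B)\<^sup>2)"
      using gauss_moment[OF s, of "sqrt (abar \<beta> N) *\<^sub>R x0" A i B] by (simp add: mult.assoc)
  qed
next
  case (Suc k)
  define n where "n = N - k"
  have kN: "k < N" using Suc.prems by simp
  have n2: "2 \<le> n" "n \<le> N" using Suc.prems by (auto simp: n_def)
  have nm1: "N - Suc k = n - 1" by (simp add: n_def)
  from Suc.IH[OF kN] have
    meas[measurable]: "(\<lambda>p. fwd_cond_aux \<beta> N k (fst p) (snd p :: real^'d)) \<in> borel_measurable (borel \<Otimes>\<^sub>M borel)"
    and nn: "\<And>x0 x. 0 \<le> fwd_cond_aux \<beta> N k x0 (x :: real^'d)"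
    and mom: "\<And>x0 i A B. (\<integral>\<^sup>+x. ennreal (fwd_cond_aux \<beta> N k x0 (x :: real^'d) * (A * x $ i + B)\<^sup>2) \<partial>lborel)
         = ennreal (A\<^sup>2 * bbar \<beta> n + (A * sqrt (abar \<beta> n) * x0 $ i + B)\<^sup>2)"
    by (auto simp: n_def)
  define f where "f = (fwd_cond_aux \<beta> N k :: real^'d \<Rightarrow> real^'d \<Rightarrow> real)"
  define K where "K x0 x y = gauss_dens (mu_til \<beta> n x x0) (btil \<beta> n) (y::real^'d)" for x0 x :: "real^'d" and y
  have s: "0 < btil \<beta> n" using btil_pos n2 by simp
  have fs: "fwd_cond_aux \<beta> N (Suc k) x0 y = (\<integral>x. f x0 x * K x0 x y \<partial>lborel)" for x0 y :: "real^'d"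
    by (simp add: f_def K_def n_def)
  have fmeas[measurable]: "(\<lambda>p. f (fst p) (snd p :: real^'d)) \<in> borel_measurable (borel \<Otimes>\<^sub>M borel)"
    using meas by (simp add: f_def)
  have Kmeas[measurable]: "(\<lambda>p. K (fst p) (fst (snd p)) (snd (snd p))) \<in> borel_measurable (lborel \<Otimes>\<^sub>M (lborel \<Otimes>\<^sub>M lborel))"
    unfolding K_def mu_til_def by measurable
  note fraw[measurable (raw)] = meas_raw[OF fmeas]
  have f1meas[measurable]: "(\<lambda>x. f x0 x) \<in> borel_measurable lborel" for x0
    by measurable
  define C where "C = (2 * pi * btil \<beta> n) powr (- real CARD('d) / 2)"
  have Kle: "K x0 x y \<le> C" for x0 x y using gauss_le[OF s] by (simp add: K_def C_def)
  have Knn: "0 \<le> K x0 x y" for x0 x y by (simp add: K_def gauss_nonneg)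
  have one: "(\<integral>\<^sup>+x. ennreal (f x0 x) \<partial>lborel) = 1" for x0
    using mom[where A=0 and B=1] by (simp add: f_def)
  have nn_le: "(\<integral>\<^sup>+x. ennreal (f x0 x * K x0 x y) \<partial>lborel) \<le> ennreal C" for x0 y
  proof -
    have "(\<integral>\<^sup>+x. ennreal (f x0 x * K x0 x y) \<partial>lborel) \<le> (\<integral>\<^sup>+x. ennreal C * ennreal (f x0 x) \<partial>lborel)"
    proof (intro nn_integral_mono)
      fix x
      have C0: "0 \<le> C" by (simp add: C_def)
      have "f x0 x * K x0 x y \<le> C * f x0 x"
        using mult_right_mono[OF Kle nn[of x0 x]] by (simp add: f_def mult.commute)
      then show "ennreal (f x0 x * K x0 x y) \<le> ennreal C * ennreal (f x0 x)"
        using C0 by (simp add: ennreal_mult[symmetric] f_def nn ennreal_leI)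
    qed
    also have "\<dots> = ennreal C" by (subst nn_integral_cmult) (auto simp: one)
    finally show ?thesis .
  qed
  have conv: "ennreal (\<integral>x. f x0 x * K x0 x y \<partial>lborel) = (\<integral>\<^sup>+x. ennreal (f x0 x * K x0 x y) \<partial>lborel)" for x0 y
  proof (rule int_as_nn)
    show "(\<lambda>x. f x0 x * K x0 x y) \<in> borel_measurable lborel"
      unfolding K_def mu_til_def by measurable
    show "0 \<le> f x0 x * K x0 x y" for x by (simp add: f_def nn Knn)
    show "(\<integral>\<^sup>+x. ennreal (f x0 x * K x0 x y) \<partial>lborel) < \<infinity>"
      using le_less_trans[OF nn_le[of x0 y] ennreal_less_top] by simp
  qed
  show ?case
  proof (intro conjI allI exI)
    show "(\<lambda>p. fwd_cond_aux \<beta> N (Suc k) (fst p) (snd p :: real^'d)) \<in> borel_measurable (borel \<Otimes>\<^sub>M borel)"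
      unfolding fs K_def mu_til_def by measurable
  next
    fix x0 x :: "real^'d"
    show "0 \<le> fwd_cond_aux \<beta> N (Suc k) x0 x"
      unfolding fs by (rule integral_nonneg_AE) (simp add: f_def nn Knn)
    have "ennreal (fwd_cond_aux \<beta> N (Suc k) x0 x) \<le> ennreal C"
      unfolding fs conv by (rule nn_le)
    then show "fwd_cond_aux \<beta> N (Suc k) x0 x \<le> C"
      using s by (simp add: C_def)
  next
    fix x0 :: "real^'d" and i A B
    show "(\<integral>\<^sup>+x. ennreal (fwd_cond_aux \<beta> N (Suc k) x0 (x :: real^'d) * (A * x $ i + B)\<^sup>2) \<partial>lborel)
         = ennreal (A\<^sup>2 * bbar \<beta> (N - Suc k) + (A * sqrt (abar \<beta> (N - Suc k)) * x0 $ i + B)\<^sup>2)"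
    proof -
      define Q where "Q y = (A * y $ i + B)\<^sup>2" for y :: "real^'d"
      define p where "p = sqrt (bbar \<beta> (n - 1) - btil \<beta> n) / sqrt (bbar \<beta> n)"
      define B' where "B' = A * (sqrt (abar \<beta> (n - 1)) - p * sqrt (abar \<beta> n)) * x0 $ i + B"
      have Qnn: "0 \<le> Q y" for y by (simp add: Q_def)
      have "(\<integral>\<^sup>+y. ennreal (fwd_cond_aux \<beta> N (Suc k) x0 y * Q y) \<partial>lborel)
          = (\<integral>\<^sup>+y. (\<integral>\<^sup>+x. ennreal (f x0 x * K x0 x y) \<partial>lborel) * ennreal (Q y) \<partial>lborel)"
        by (intro nn_integral_cong) (simp only: fs, simp add: ennreal_mult'' Qnn conv[symmetric])
      also have "\<dots> = (\<integral>\<^sup>+y. (\<integral>\<^sup>+x. ennreal (f x0 x * (K x0 x y * Q y)) \<partial>lborel) \<partial>lborel)"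
      proof (intro nn_integral_cong)
        fix y
        have e: "ennreal (f x0 x * (K x0 x y * Q y)) = ennreal (f x0 x * K x0 x y) * ennreal (Q y)" for x
          by (subst ennreal_mult[symmetric]) (auto simp: mult.assoc Qnn f_def nn Knn)
        show "(\<integral>\<^sup>+x. ennreal (f x0 x * K x0 x y) \<partial>lborel) * ennreal (Q y)
            = (\<integral>\<^sup>+x. ennreal (f x0 x * (K x0 x y * Q y)) \<partial>lborel)"
          unfolding e by (rule nn_integral_multc[symmetric]) (unfold K_def mu_til_def, measurable)
      qed
      also have "\<dots> = (\<integral>\<^sup>+x. (\<integral>\<^sup>+y. ennreal (f x0 x * (K x0 x y * Q y)) \<partial>lborel) \<partial>lborel)"
        by (rule lborel_pair.Fubini') (unfold Q_def K_def mu_til_def, measurable)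
      also have "\<dots> = (\<integral>\<^sup>+x. ennreal (f x0 x) * (\<integral>\<^sup>+y. ennreal (K x0 x y * Q y) \<partial>lborel) \<partial>lborel)"
      proof (intro nn_integral_cong)
        fix x
        have e: "ennreal (f x0 x * (K x0 x y * Q y)) = ennreal (f x0 x) * ennreal (K x0 x y * Q y)" for y
          by (rule ennreal_mult) (auto simp: Qnn f_def nn Knn)
        show "(\<integral>\<^sup>+y. ennreal (f x0 x * (K x0 x y * Q y)) \<partial>lborel)
            = ennreal (f x0 x) * (\<integral>\<^sup>+y. ennreal (K x0 x y * Q y) \<partial>lborel)"
          unfolding e by (rule nn_integral_cmult) (unfold K_def mu_til_def Q_def, measurable)
      qed
      also have "\<dots> = (\<integral>\<^sup>+x. ennreal (f x0 x * (A\<^sup>2 * btil \<beta> n + (A * p * x $ i + B')\<^sup>2)) \<partial>lborel)"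
      proof (intro nn_integral_cong)
        fix x
        have g: "(\<integral>\<^sup>+y. ennreal (K x0 x y * Q y) \<partial>lborel) = ennreal (A\<^sup>2 * btil \<beta> n + (A * mu_til \<beta> n x x0 $ i + B)\<^sup>2)"
          unfolding K_def Q_def by (rule gauss_moment[OF s])
        have m: "A * mu_til \<beta> n x x0 $ i + B = A * p * x $ i + B'"
          using bbar_pos[of n] n2 by (simp add: mu_til_comp p_def B'_def field_simps)
        show "ennreal (f x0 x) * (\<integral>\<^sup>+y. ennreal (K x0 x y * Q y) \<partial>lborel)
           = ennreal (f x0 x * (A\<^sup>2 * btil \<beta> n + (A * p * x $ i + B')\<^sup>2))"
          unfolding g m using s by (subst ennreal_mult) (auto simp: f_def nn)
      qed
      also have "\<dots> = (\<integral>\<^sup>+x. ennreal (A\<^sup>2 * btil \<beta> n) * ennreal (f x0 x) + ennreal (f x0 x * (A * p * x $ i + B')\<^sup>2) \<partial>lborel)"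
      proof (intro nn_integral_cong)
        fix x
        have c0: "0 \<le> A\<^sup>2 * btil \<beta> n" using s by simp
        have "ennreal (f x0 x * (A\<^sup>2 * btil \<beta> n + (A * p * x $ i + B')\<^sup>2))
            = ennreal (A\<^sup>2 * btil \<beta> n * f x0 x) + ennreal (f x0 x * (A * p * x $ i + B')\<^sup>2)"
          using c0 mult_nonneg_nonneg[OF c0 nn[of x0 x]]
          by (subst ennreal_plus[symmetric]) (auto simp: algebra_simps f_def nn)
        also have "ennreal (A\<^sup>2 * btil \<beta> n * f x0 x) = ennreal (A\<^sup>2 * btil \<beta> n) * ennreal (f x0 x)"
          using c0 by (rule ennreal_mult) (simp add: f_def nn)
        finally show "ennreal (f x0 x * (A\<^sup>2 * btil \<beta> n + (A * p * x $ i + B')\<^sup>2))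
            = ennreal (A\<^sup>2 * btil \<beta> n) * ennreal (f x0 x) + ennreal (f x0 x * (A * p * x $ i + B')\<^sup>2)" .
      qed
      also have "\<dots> = ennreal (A\<^sup>2 * btil \<beta> n) + ennreal ((A * p)\<^sup>2 * bbar \<beta> n + (A * p * sqrt (abar \<beta> n) * x0 $ i + B')\<^sup>2)"
        by (subst nn_integral_add) (auto simp: nn_integral_cmult one mom[unfolded f_def[symmetric]])
      also have "\<dots> = ennreal (A\<^sup>2 * bbar \<beta> (n - 1) + (A * sqrt (abar \<beta> (n - 1)) * x0 $ i + B)\<^sup>2)"
      proof -
        have b: "0 < bbar \<beta> n" using bbar_pos n2 by simp
        have "p\<^sup>2 * bbar \<beta> n = bbar \<beta> (n - 1) - btil \<beta> n"
          using b btil_nn[of n] n2 by (simp add: p_def power_divide)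
        then have "A\<^sup>2 * btil \<beta> n + (A * p)\<^sup>2 * bbar \<beta> n = A\<^sup>2 * bbar \<beta> (n - 1)"
        proof -
          assume h: "p\<^sup>2 * bbar \<beta> n = bbar \<beta> (n - 1) - btil \<beta> n"
          have "A\<^sup>2 * btil \<beta> n + (A * p)\<^sup>2 * bbar \<beta> n = A\<^sup>2 * (btil \<beta> n + p\<^sup>2 * bbar \<beta> n)"
            by (simp add: power_mult_distrib algebra_simps)
          also have "\<dots> = A\<^sup>2 * bbar \<beta> (n - 1)" using h by simp
          finally show ?thesis .
        qed
        moreover have "A * p * sqrt (abar \<beta> n) * x0 $ i + B' = A * sqrt (abar \<beta> (n - 1)) * x0 $ i + B"
          by (simp add: B'_def algebra_simps)
        moreover have "ennreal (A\<^sup>2 * btil \<beta> n) + ennreal ((A * p)\<^sup>2 * bbar \<beta> n + (A * p * sqrt (abar \<beta> n) * x0 $ i + B')\<^sup>2)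
           = ennreal (A\<^sup>2 * btil \<beta> n + ((A * p)\<^sup>2 * bbar \<beta> n + (A * p * sqrt (abar \<beta> n) * x0 $ i + B')\<^sup>2))"
          using s b by (intro ennreal_plus[symmetric]) auto
        ultimately show ?thesis
          by (simp add: add.assoc[symmetric])
      qed
      finally show ?thesis by (simp add: Q_def nm1)
    qed
  qed
qed

end


lemma sq_bound: "(t::real)\<^sup>2 \<le> 2 * (t - c)\<^sup>2 + 2 * c\<^sup>2"
proof -
  have "0 \<le> (t - 2 * c)\<^sup>2" by simp
  then show ?thesis by (simp add: power2_eq_square algebra_simps)
qed

lemma abs_bound: "\<bar>t::real\<bar> \<le> 1 + t\<^sup>2"
proof (cases "\<bar>t\<bar> \<le> 1")
  case True then show ?thesis by (simp add: add_increasing2)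
next
  case False then have "\<bar>t\<bar> * 1 \<le> \<bar>t\<bar> * \<bar>t\<bar>" by (intro mult_left_mono) auto
  moreover have "\<bar>t\<bar> * \<bar>t\<bar> = t * t" by (metis abs_mult abs_mult_self_eq)
  ultimately show ?thesis by (simp add: power2_eq_square)
qed

lemma var_point:
  fixes g :: "real^'d \<Rightarrow> real"
  assumes gm[measurable]: "g \<in> borel_measurable lborel" and gnn: "\<And>y. 0 \<le> g y"
    and gM: "(\<integral>\<^sup>+y. ennreal (g y) \<partial>lborel) = ennreal Mx" and Mpos: "0 < Mx"
    and fin: "(\<integral>\<^sup>+y. ennreal (g y * (y $ i - c)\<^sup>2) \<partial>lborel) < \<infinity>"
  defines "m \<equiv> \<integral>y. g y / Mx * y $ i \<partial>lborel"
  shows "Mx * (\<integral>y. g y / Mx * (y $ i - m)\<^sup>2 \<partial>lborel) \<le> enn2real (\<integral>\<^sup>+y. ennreal (g y * (y $ i - c)\<^sup>2) \<partial>lborel)"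
    and "ennreal (Mx * (\<integral>y. g y / Mx * (y $ i - m)\<^sup>2 \<partial>lborel)) = (\<integral>\<^sup>+y. ennreal (g y * (y $ i - m)\<^sup>2) \<partial>lborel)"
proof -
  have ig: "integrable lborel g"
    using gM by (intro integrableI_nonneg) (auto simp: gnn)
  have h0: "has_bochner_integral lborel g Mx"
    using gM ig gnn Mpos by (subst (asm) nn_integral_eq_integrable) (auto simp: has_bochner_integral_iff)
  have igc: "integrable lborel (\<lambda>y. g y * (y $ i - c)\<^sup>2)"
    using fin by (intro integrableI_nonneg) (auto simp: gnn)
  have ig2: "integrable lborel (\<lambda>y. g y * (y $ i)\<^sup>2)"
  proof (rule Bochner_Integration.integrable_bound)
    show "integrable lborel (\<lambda>y. 2 * (g y * (y $ i - c)\<^sup>2) + 2 * c\<^sup>2 * g y)"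
      using igc ig by auto
    show "(\<lambda>y. g y * (y $ i)\<^sup>2) \<in> borel_measurable lborel" by measurable
    show "AE y in lborel. norm (g y * (y $ i)\<^sup>2) \<le> norm (2 * (g y * (y $ i - c)\<^sup>2) + 2 * c\<^sup>2 * g y)"
    proof (intro AE_I2)
      fix y
      have "g y * (y $ i)\<^sup>2 \<le> g y * (2 * (y $ i - c)\<^sup>2 + 2 * c\<^sup>2)"
        using mult_left_mono[OF sq_bound gnn] by simp
      then show "norm (g y * (y $ i)\<^sup>2) \<le> norm (2 * (g y * (y $ i - c)\<^sup>2) + 2 * c\<^sup>2 * g y)"
        using gnn[of y] by (simp add: algebra_simps)
    qed
  qed
  have ig1: "integrable lborel (\<lambda>y. g y * y $ i)"
  proof (rule Bochner_Integration.integrable_bound)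
    show "integrable lborel (\<lambda>y. g y + g y * (y $ i)\<^sup>2)"
      using ig2 ig by auto
    show "(\<lambda>y. g y * y $ i) \<in> borel_measurable lborel" by measurable
    show "AE y in lborel. norm (g y * y $ i) \<le> norm (g y + g y * (y $ i)\<^sup>2)"
    proof (intro AE_I2)
      fix y
      have "g y * \<bar>y $ i\<bar> \<le> g y * (1 + (y $ i)\<^sup>2)"
        using mult_left_mono[OF abs_bound gnn] by simp
      then show "norm (g y * y $ i) \<le> norm (g y + g y * (y $ i)\<^sup>2)"
        using gnn[of y] by (simp add: algebra_simps abs_mult)
    qed
  qed
  define E1 where "E1 = (\<integral>y. g y * y $ i \<partial>lborel)"
  define E2 where "E2 = (\<integral>y. g y * (y $ i)\<^sup>2 \<partial>lborel)"
  have h1: "has_bochner_integral lborel (\<lambda>y. g y * y $ i) E1"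
    using ig1 by (simp add: E1_def has_bochner_integral_iff)
  have h2: "has_bochner_integral lborel (\<lambda>y. g y * (y $ i)\<^sup>2) E2"
    using ig2 by (simp add: E2_def has_bochner_integral_iff)
  have expand: "has_bochner_integral lborel (\<lambda>y. g y * (y $ i - t)\<^sup>2) (E2 - 2 * t * E1 + t\<^sup>2 * Mx)" for t
  proof -
    have "has_bochner_integral lborel (\<lambda>y. g y * (y $ i)\<^sup>2 - (2 * t) * (g y * y $ i) + t\<^sup>2 * g y) (E2 - (2 * t) * E1 + t\<^sup>2 * Mx)"
      by (intro has_bochner_integral_add has_bochner_integral_diff has_bochner_integral_mult_right h0 h1 h2)
    then show ?thesis
      by (rule has_bochner_integral_cong[THEN iffD1, rotated 3]) (auto simp: power2_eq_square algebra_simps)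
  qed
  have m_eq: "m = E1 / Mx"
  proof -
    have "m = (\<integral>y. g y * y $ i / Mx \<partial>lborel)" unfolding m_def by (simp add: ac_simps)
    also have "\<dots> = E1 / Mx" by (simp add: E1_def)
    finally show ?thesis .
  qed
  have Mint: "Mx * (\<integral>y. g y / Mx * (y $ i - m)\<^sup>2 \<partial>lborel) = (\<integral>y. g y * (y $ i - m)\<^sup>2 \<partial>lborel)"
  proof -
    have "(\<integral>y. g y / Mx * (y $ i - m)\<^sup>2 \<partial>lborel) = (\<integral>y. g y * (y $ i - m)\<^sup>2 / Mx \<partial>lborel)"
      by (simp add: ac_simps)
    also have "\<dots> = (\<integral>y. g y * (y $ i - m)\<^sup>2 \<partial>lborel) / Mx" by simp
    finally show ?thesis using Mpos by simp
  qed
  have vm: "(\<integral>y. g y * (y $ i - m)\<^sup>2 \<partial>lborel) = E2 - 2 * m * E1 + m\<^sup>2 * Mx"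
    using expand[of m] by (simp add: has_bochner_integral_iff)
  have vc: "(\<integral>y. g y * (y $ i - c)\<^sup>2 \<partial>lborel) = E2 - 2 * c * E1 + c\<^sup>2 * Mx"
    using expand[of c] by (simp add: has_bochner_integral_iff)
  have "E2 - 2 * m * E1 + m\<^sup>2 * Mx \<le> E2 - 2 * c * E1 + c\<^sup>2 * Mx"
  proof -
    have "(E2 - 2 * c * E1 + c\<^sup>2 * Mx) - (E2 - 2 * m * E1 + m\<^sup>2 * Mx) = (E1 - c * Mx)\<^sup>2 / Mx"
      using Mpos unfolding m_eq by (simp add: field_simps power2_eq_square)
    moreover have "0 \<le> (E1 - c * Mx)\<^sup>2 / Mx" using Mpos by simp
    ultimately show ?thesis by linarith
  qed
  moreover have "enn2real (\<integral>\<^sup>+y. ennreal (g y * (y $ i - c)\<^sup>2) \<partial>lborel) = (\<integral>y. g y * (y $ i - c)\<^sup>2 \<partial>lborel)"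
    by (rule integral_eq_nn_integral[symmetric]) (auto simp: gnn)
  ultimately show "Mx * (\<integral>y. g y / Mx * (y $ i - m)\<^sup>2 \<partial>lborel) \<le> enn2real (\<integral>\<^sup>+y. ennreal (g y * (y $ i - c)\<^sup>2) \<partial>lborel)"
    unfolding Mint vm vc by simp
  have "integrable lborel (\<lambda>y. g y * (y $ i - m)\<^sup>2)"
    using expand[of m] by (simp add: has_bochner_integral_iff)
  then show "ennreal (Mx * (\<integral>y. g y / Mx * (y $ i - m)\<^sup>2 \<partial>lborel)) = (\<integral>\<^sup>+y. ennreal (g y * (y $ i - m)\<^sup>2) \<partial>lborel)"
    unfolding Mint by (rule nn_integral_eq_integral[symmetric]) (auto simp: gnn)
qed


lemma assembly:
  fixes J :: "real^'d \<Rightarrow> real^'d \<Rightarrow> real" and M :: "real^'d \<Rightarrow> real" and c :: "'d \<Rightarrow> real^'d \<Rightarrow> real"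
  assumes Jmeas: "(\<lambda>p. J (fst p) (snd p)) \<in> borel_measurable (borel \<Otimes>\<^sub>M borel)"
    and Mmeas[measurable]: "M \<in> borel_measurable borel"
    and Jnn: "\<And>y x. 0 \<le> J y x" and Mnn: "\<And>x. 0 \<le> M x"
    and JM: "\<And>x. (\<integral>\<^sup>+y. ennreal (J y x) \<partial>lborel) = ennreal (M x)"
    and Mone: "(\<integral>\<^sup>+x. ennreal (M x) \<partial>lborel) = 1"
    and cmeas[measurable]: "\<And>i. c i \<in> borel_measurable borel"
    and U0: "0 \<le> U"
    and Ub: "(\<integral>\<^sup>+x. (\<Sum>i\<in>UNIV. \<integral>\<^sup>+y. ennreal (J y x * (y $ i - c i x)\<^sup>2) \<partial>lborel) \<partial>lborel)
              \<le> ennreal (real CARD('d) * U)"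
  defines "S \<equiv> (\<integral>x. M x * (\<Sum>i\<in>UNIV. \<integral>y. J y x / M x * (y $ i - (\<chi> i. \<integral>y. J y x / M x * y $ i \<partial>lborel) $ i)\<^sup>2 \<partial>lborel) \<partial>lborel)
                / real CARD('d)"
  shows "S \<le> U \<and> ((\<forall>x t i. ennreal (L * M x) \<le> (\<integral>\<^sup>+y. ennreal (J y x * (y $ i - t)\<^sup>2) \<partial>lborel)) \<longrightarrow> L \<le> S)"
proof -
  note Jraw[measurable (raw)] = meas_raw[OF Jmeas]
  define d where "d = real CARD('d)"
  have d0: "0 < d" by (simp add: d_def)
  define m where "m i x = (\<integral>y. J y x / M x * y $ i \<partial>lborel)" for i x
  define V where "V x = M x * (\<Sum>i\<in>UNIV. \<integral>y. J y x / M x * (y $ i - m i x)\<^sup>2 \<partial>lborel)" for x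
  have S_eq: "S = (\<integral>x. V x \<partial>lborel) / d"
    by (simp add: S_def V_def m_def d_def)
  define W where "W x = (\<Sum>i\<in>UNIV. \<integral>\<^sup>+y. ennreal (J y x * (y $ i - c i x)\<^sup>2) \<partial>lborel)" for x
  have Wmeas: "W \<in> borel_measurable lborel"
    unfolding W_def by measurable
  have Vmeas[measurable]: "V \<in> borel_measurable lborel"
    unfolding V_def m_def by measurable
  have Vnn: "0 \<le> V x" for x
    unfolding V_def using Mnn[of x] Jnn
    by (intro mult_nonneg_nonneg sum_nonneg integral_nonneg_AE AE_I2) auto
  have Wfin: "AE x in lborel. W x \<noteq> \<infinity>"
  proof -
    have Wi: "integral\<^sup>N lborel W \<le> ennreal (real CARD('d) * U)" using Ub by (simp add: W_def[abs_def])
    show ?thesis using Wi by (intro nn_integral_PInf_AE[OF Wmeas]) (auto simp: top_unique)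
  qed
  have pt: "AE x in lborel. ennreal (V x) \<le> W x \<and>
      ((\<forall>t i. ennreal (L * M x) \<le> (\<integral>\<^sup>+y. ennreal (J y x * (y $ i - t)\<^sup>2) \<partial>lborel)) \<longrightarrow> d * L * M x \<le> V x)"
    using Wfin
  proof (eventually_elim)
    case (elim x)
    show ?case
    proof (cases "M x = 0")
      case True then show ?thesis by (simp add: V_def)
    next
      case False
      then have Mp: "0 < M x" using Mnn[of x] by simp
      have gm: "(\<lambda>y. J y x) \<in> borel_measurable lborel" by measurable
      have fin: "(\<integral>\<^sup>+y. ennreal (J y x * (y $ i - c i x)\<^sup>2) \<partial>lborel) < \<infinity>" for i
        using elim by (simp add: W_def less_top)
      note vp1 = var_point(1)[OF gm Jnn JM Mp fin, folded m_def]
      note vp2 = var_point(2)[OF gm Jnn JM Mp fin, folded m_def]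
      define T where "T i = M x * (\<integral>y. J y x / M x * (y $ i - m i x)\<^sup>2 \<partial>lborel)" for i
      have Tnn: "0 \<le> T i" for i
        unfolding T_def using Mnn[of x] Jnn
        by (intro mult_nonneg_nonneg integral_nonneg_AE AE_I2) auto
      have VT: "V x = (\<Sum>i\<in>UNIV. T i)" by (simp add: V_def T_def sum_distrib_left)
      have "ennreal (V x) = (\<Sum>i\<in>UNIV. ennreal (T i))"
        unfolding VT using Tnn by (simp add: sum_ennreal)
      also have "\<dots> \<le> (\<Sum>i\<in>UNIV. ennreal (enn2real (\<integral>\<^sup>+y. ennreal (J y x * (y $ i - c i x)\<^sup>2) \<partial>lborel)))"
        by (intro sum_mono ennreal_leI) (unfold T_def, rule vp1)
      also have "\<dots> = W x"
        unfolding W_def using fin by (intro sum.cong refl ennreal_enn2real) auto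
      finally have up: "ennreal (V x) \<le> W x" .
      have low: "d * L * M x \<le> V x"
        if H: "\<forall>t i. ennreal (L * M x) \<le> (\<integral>\<^sup>+y. ennreal (J y x * (y $ i - t)\<^sup>2) \<partial>lborel)"
      proof -
        have "L * M x \<le> T i" for i
        proof -
          have "ennreal (L * M x) \<le> ennreal (T i)"
            using spec[OF spec[OF H, of "m i x"], of i] vp2[of i] by (simp add: T_def)
          then show ?thesis using Tnn[of i] by simp
        qed
        then have "(\<Sum>i\<in>(UNIV::'d set). L * M x) \<le> (\<Sum>i\<in>UNIV. T i)" by (intro sum_mono) auto
        then show ?thesis by (simp add: VT d_def)
      qed
      show ?thesis using up low by blast
    qed
  qed
  have "(\<integral>\<^sup>+x. ennreal (V x) \<partial>lborel) \<le> (\<integral>\<^sup>+x. W x \<partial>lborel)"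
    using pt by (intro nn_integral_mono_AE) auto
  also have "\<dots> \<le> ennreal (d * U)" using Ub by (simp add: W_def d_def)
  finally have Vle: "(\<integral>\<^sup>+x. ennreal (V x) \<partial>lborel) \<le> ennreal (d * U)" .
  have Vint: "integrable lborel V"
    using Vle by (intro integrableI_nonneg) (auto simp: Vnn intro: le_less_trans[OF _ ennreal_less_top])
  have "ennreal (\<integral>x. V x \<partial>lborel) \<le> ennreal (d * U)"
    using Vle Vint by (simp add: nn_integral_eq_integral Vnn)
  then have "(\<integral>x. V x \<partial>lborel) \<le> d * U" using d0 U0 by simp
  then have up: "S \<le> U" unfolding S_eq using d0 by (simp add: divide_le_eq mult.commute)
  have Mint: "integrable lborel M"
    using Mone by (intro integrableI_nonneg) (auto simp: Mnn)
  have M1: "(\<integral>x. M x \<partial>lborel) = 1"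
    by (subst integral_eq_nn_integral) (auto simp: Mnn Mone)
  have low: "L \<le> S" if H: "\<forall>x t i. ennreal (L * M x) \<le> (\<integral>\<^sup>+y. ennreal (J y x * (y $ i - t)\<^sup>2) \<partial>lborel)"
  proof -
    have "(\<integral>x. d * L * M x \<partial>lborel) \<le> (\<integral>x. V x \<partial>lborel)"
      using pt H Mint Vint by (intro integral_mono_AE) auto
    then have "d * L \<le> (\<integral>x. V x \<partial>lborel)" using M1 by simp
    then show ?thesis unfolding S_eq using d0 by (simp add: le_divide_eq mult.commute)
  qed
  show ?thesis using up low by blast
qed


lemma mom_shift:
  fixes F :: "real^'d \<Rightarrow> real"
  assumes Fm[measurable]: "F \<in> borel_measurable lborel" and Fnn: "\<And>x. 0 \<le> F x"
    and Fmom: "\<And>A B. (\<integral>\<^sup>+x. ennreal (F x * (A * x $ i + B)\<^sup>2) \<partial>lborel) = ennreal (A\<^sup>2 * s + (A * \<mu> + B)\<^sup>2)"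
    and c0: "0 \<le> c" and s0: "0 \<le> s"
  shows "(\<integral>\<^sup>+x. ennreal (F x * (c + (A * x $ i + B)\<^sup>2)) \<partial>lborel) = ennreal (c + A\<^sup>2 * s + (A * \<mu> + B)\<^sup>2)"
proof -
  have one: "(\<integral>\<^sup>+x. ennreal (F x) \<partial>lborel) = 1" using Fmom[of 0 1] by simp
  have "(\<integral>\<^sup>+x. ennreal (F x * (c + (A * x $ i + B)\<^sup>2)) \<partial>lborel)
      = (\<integral>\<^sup>+x. ennreal c * ennreal (F x) + ennreal (F x * (A * x $ i + B)\<^sup>2) \<partial>lborel)"
  proof (intro nn_integral_cong)
    fix x
    have "ennreal (F x * (c + (A * x $ i + B)\<^sup>2)) = ennreal (c * F x) + ennreal (F x * (A * x $ i + B)\<^sup>2)"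
      using c0 mult_nonneg_nonneg[OF c0 Fnn[of x]] Fnn[of x]
      by (subst ennreal_plus[symmetric]) (auto simp: algebra_simps)
    also have "ennreal (c * F x) = ennreal c * ennreal (F x)"
      using c0 Fnn[of x] by (rule ennreal_mult)
    finally show "ennreal (F x * (c + (A * x $ i + B)\<^sup>2)) = ennreal c * ennreal (F x) + ennreal (F x * (A * x $ i + B)\<^sup>2)" .
  qed
  also have "\<dots> = ennreal c + ennreal (A\<^sup>2 * s + (A * \<mu> + B)\<^sup>2)"
    by (subst nn_integral_add) (auto simp: nn_integral_cmult one Fmom)
  also have "\<dots> = ennreal (c + A\<^sup>2 * s + (A * \<mu> + B)\<^sup>2)"
    using c0 s0 by (subst ennreal_plus[symmetric]) (auto simp: add.assoc)
  finally show ?thesis .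
qed

context sched
begin

lemma fwd_props:
  assumes n: "n \<in> {1..N}"
  shows "(\<lambda>p. fwd_cond \<beta> N n (fst p) (snd p :: real^'d)) \<in> borel_measurable (borel \<Otimes>\<^sub>M borel)"
    and "\<And>x0 x. 0 \<le> fwd_cond \<beta> N n x0 (x :: real^'d)"
    and "\<exists>C. \<forall>x0 x. fwd_cond \<beta> N n x0 (x :: real^'d) \<le> C"
    and "\<And>x0 i A B. (\<integral>\<^sup>+x. ennreal (fwd_cond \<beta> N n x0 (x :: real^'d) * (A * x $ i + B)\<^sup>2) \<partial>lborel)
         = ennreal (A\<^sup>2 * bbar \<beta> n + (A * sqrt (abar \<beta> n) * x0 $ i + B)\<^sup>2)"
proof -
  have k: "N - n < N" "N - (N - n) = n" using n by auto
  note I = fwd_inv[OF k(1), where 'd='d, unfolded k(2)]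
  show "(\<lambda>p. fwd_cond \<beta> N n (fst p) (snd p :: real^'d)) \<in> borel_measurable (borel \<Otimes>\<^sub>M borel)"
    using I by (simp add: fwd_cond_def)
  show "\<And>x0 x. 0 \<le> fwd_cond \<beta> N n x0 (x :: real^'d)"
    using I by (simp add: fwd_cond_def)
  show "\<exists>C. \<forall>x0 x. fwd_cond \<beta> N n x0 (x :: real^'d) \<le> C"
    using I by (simp add: fwd_cond_def)
  show "\<And>x0 i A B. (\<integral>\<^sup>+x. ennreal (fwd_cond \<beta> N n x0 (x :: real^'d) * (A * x $ i + B)\<^sup>2) \<partial>lborel)
         = ennreal (A\<^sup>2 * bbar \<beta> n + (A * sqrt (abar \<beta> n) * x0 $ i + B)\<^sup>2)"
    using I by (simp add: fwd_cond_def)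
qed

end


lemma alg_b1:
  fixes s b B \<beta> :: real
  assumes s: "0 < s" and bpos: "0 < B * s\<^sup>2 + \<beta>" and b: "b = B * s\<^sup>2 + \<beta>"
  shows "B * \<beta> / b + (s * B / b - 1 / s)\<^sup>2 * b = \<beta> / s\<^sup>2"
proof -
  have D: "0 < b" using b bpos by simp
  have 1: "s * B / b - 1 / s = - \<beta> / (s * b)"
    using s D by (simp add: field_simps) (simp add: b power2_eq_square algebra_simps)
  have 2: "(- \<beta> / (s * b))\<^sup>2 * b = \<beta>\<^sup>2 / (s\<^sup>2 * b)"
    using s D by (simp add: power2_eq_square field_simps)
  have 3: "B * \<beta> / b + \<beta>\<^sup>2 / (s\<^sup>2 * b) = \<beta> / s\<^sup>2"
    using s D by (simp add: field_simps) (simp add: b power2_eq_square algebra_simps eval_nat_numeral)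
  show ?thesis unfolding 1 2 3 ..
qed

lemma alg_b2:
  fixes s b B \<beta> A :: real
  assumes s: "0 < s" and bpos: "0 < B * s\<^sup>2 + \<beta>" and b: "b = B * s\<^sup>2 + \<beta>"
  shows "A - s * B / b * (A * s) = A * \<beta> / b"
  unfolding b using s bpos by (simp add: field_simps power2_eq_square)

context sched begin
lemma sched_alg:
  assumes n: "n \<in> {1..N}"
  shows "sqrt (bbar \<beta> (n - 1) - btil \<beta> n) / sqrt (bbar \<beta> n) = sqrt (alpha \<beta> n) * bbar \<beta> (n - 1) / bbar \<beta> n"
    and "sqrt (abar \<beta> n) = sqrt (abar \<beta> (n - 1)) * sqrt (alpha \<beta> n)"
proof -
  have b: "0 < bbar \<beta> n" using bbar_pos n by auto
  have B: "0 \<le> bbar \<beta> (n - 1)" using bbar_nn n by auto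
  have a: "0 < alpha \<beta> n" using alpha_pos n by auto
  have "sqrt (bbar \<beta> (n - 1) - btil \<beta> n) = sqrt (alpha \<beta> n) * bbar \<beta> (n - 1) / sqrt (bbar \<beta> n)"
    using btil_key[of n] n B b a by (simp add: real_sqrt_mult real_sqrt_divide)
  then show "sqrt (bbar \<beta> (n - 1) - btil \<beta> n) / sqrt (bbar \<beta> n) = sqrt (alpha \<beta> n) * bbar \<beta> (n - 1) / bbar \<beta> n"
    using b by simp
  show "sqrt (abar \<beta> n) = sqrt (abar \<beta> (n - 1)) * sqrt (alpha \<beta> n)"
    using abar_n[of n] n by (simp add: real_sqrt_mult)
qed

lemma bound1_alg:
  assumes n: "n \<in> {1..N}"
  defines "p \<equiv> sqrt (bbar \<beta> (n - 1) - btil \<beta> n) / sqrt (bbar \<beta> n)"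
  shows "btil \<beta> n + (p - 1 / sqrt (alpha \<beta> n))\<^sup>2 * bbar \<beta> n = \<beta> n / alpha \<beta> n"
    and "sqrt (abar \<beta> (n - 1)) - 1 / sqrt (alpha \<beta> n) * sqrt (abar \<beta> n) = 0"
proof -
  have b: "0 < bbar \<beta> n" using bbar_pos n by auto
  have a: "0 < alpha \<beta> n" using alpha_pos n by auto
  have e: "bbar \<beta> n = bbar \<beta> (n - 1) * alpha \<beta> n + \<beta> n" using bbar_n n by auto
  have sa0: "0 < sqrt (alpha \<beta> n)" using a by simp
  have pe: "p = sqrt (alpha \<beta> n) * bbar \<beta> (n - 1) / bbar \<beta> n" using sched_alg(1)[OF n] by (simp add: p_def)
  have as: "alpha \<beta> n = (sqrt (alpha \<beta> n))\<^sup>2" using a by simp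
  have e': "bbar \<beta> n = bbar \<beta> (n - 1) * (sqrt (alpha \<beta> n))\<^sup>2 + \<beta> n" using e a by simp
  have "btil \<beta> n + (p - 1 / sqrt (alpha \<beta> n))\<^sup>2 * bbar \<beta> n = \<beta> n / (sqrt (alpha \<beta> n))\<^sup>2"
    unfolding pe btil_def using alg_b1[OF sa0 _ e'] b e' by (simp add: mult.commute)
  then show "btil \<beta> n + (p - 1 / sqrt (alpha \<beta> n))\<^sup>2 * bbar \<beta> n = \<beta> n / alpha \<beta> n"
    using a by simp
  show "sqrt (abar \<beta> (n - 1)) - 1 / sqrt (alpha \<beta> n) * sqrt (abar \<beta> n) = 0"
    using sched_alg(2)[OF n] sa0 by simp
qed

lemma bound2_alg:
  assumes n: "n \<in> {1..N}"
  defines "p \<equiv> sqrt (bbar \<beta> (n - 1) - btil \<beta> n) / sqrt (bbar \<beta> n)"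
  shows "(sqrt (abar \<beta> (n - 1)) - p * sqrt (abar \<beta> n))\<^sup>2 = abar \<beta> (n - 1) * (\<beta> n)\<^sup>2 / (bbar \<beta> n)\<^sup>2"
proof -
  have b: "0 < bbar \<beta> n" using bbar_pos n by auto
  have a: "0 < alpha \<beta> n" using alpha_pos n by auto
  have nm: "n - 1 \<le> N" using n diff_le_self[of n 1] by (simp only: atLeastAtMost_iff) linarith
  have A: "0 \<le> abar \<beta> (n - 1)" using abar_bounds[OF nm] by simp
  have e: "bbar \<beta> n = bbar \<beta> (n - 1) * alpha \<beta> n + \<beta> n" using bbar_n n by auto
  have sa0: "0 < sqrt (alpha \<beta> n)" using a by simp
  have e': "bbar \<beta> n = bbar \<beta> (n - 1) * (sqrt (alpha \<beta> n))\<^sup>2 + \<beta> n" using e a by simp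
  have pe: "p = sqrt (alpha \<beta> n) * bbar \<beta> (n - 1) / bbar \<beta> n" using sched_alg(1)[OF n] by (simp add: p_def)
  have "sqrt (abar \<beta> (n - 1)) - p * sqrt (abar \<beta> n) = sqrt (abar \<beta> (n - 1)) * \<beta> n / bbar \<beta> n"
    unfolding pe sched_alg(2)[OF n] using alg_b2[OF sa0 _ e'] b e' by simp
  then show ?thesis using A by (simp add: power_divide power_mult_distrib)
qed
end


context sched begin

lemma main_facts:
  fixes q :: "real^'d \<Rightarrow> real"
  assumes n: "n \<in> {1..N}"
    and qm[measurable]: "q \<in> borel_measurable borel" and qnn: "\<And>x. 0 \<le> q x"
    and q1: "(\<integral>\<^sup>+x. ennreal (q x) \<partial>lborel) = 1"
  defines "J \<equiv> \<lambda>y x. joint q \<beta> N n y x" and "M \<equiv> marg q \<beta> N n"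
    and "p \<equiv> sqrt (bbar \<beta> (n - 1) - btil \<beta> n) / sqrt (bbar \<beta> n)"
  shows "(\<lambda>p. J (fst p) (snd p)) \<in> borel_measurable (borel \<Otimes>\<^sub>M borel)"
    and "M \<in> borel_measurable borel"
    and "\<And>y x. 0 \<le> J y x" and "\<And>x. 0 \<le> M x"
    and "\<And>x. (\<integral>\<^sup>+y. ennreal (J y x) \<partial>lborel) = ennreal (M x)"
    and "(\<integral>\<^sup>+x. ennreal (M x) \<partial>lborel) = 1"
    and "\<And>x t i. ennreal (btil \<beta> n * M x) \<le> (\<integral>\<^sup>+y. ennreal (J y x * (y $ i - t)\<^sup>2) \<partial>lborel)"
    and "\<And>u v i. (\<integral>\<^sup>+x. (\<integral>\<^sup>+y. ennreal (J y x * (y $ i - (u * x $ i + v))\<^sup>2) \<partial>lborel) \<partial>lborel)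
          = (\<integral>\<^sup>+x0. ennreal (q x0) * ennreal (btil \<beta> n + (p - u)\<^sup>2 * bbar \<beta> n
               + ((sqrt (abar \<beta> (n - 1)) - u * sqrt (abar \<beta> n)) * x0 $ i - v)\<^sup>2) \<partial>lborel)"
proof -
  define F where "F = (fwd_cond \<beta> N n :: real^'d \<Rightarrow> real^'d \<Rightarrow> real)"
  note fp = fwd_props[OF n, where 'd='d, folded F_def]
  have Fmeas: "(\<lambda>p. F (fst p) (snd p)) \<in> borel_measurable (borel \<Otimes>\<^sub>M borel)" by (rule fp(1))
  note Fraw[measurable (raw)] = meas_raw[OF Fmeas]
  have Fnn: "\<And>x0 x. 0 \<le> F x0 x" by (rule fp(2))
  obtain C where FC: "\<And>x0 x. F x0 x \<le> C" using fp(3) by blast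
  have Fmom: "\<And>x0 i A B. (\<integral>\<^sup>+x. ennreal (F x0 x * (A * x $ i + B)\<^sup>2) \<partial>lborel)
         = ennreal (A\<^sup>2 * bbar \<beta> n + (A * sqrt (abar \<beta> n) * x0 $ i + B)\<^sup>2)" by (rule fp(4))
  have Fone: "(\<integral>\<^sup>+x. ennreal (F x0 x) \<partial>lborel) = 1" for x0
    using Fmom[where A=0 and B=1] by simp
  have C0: "0 \<le> C" using Fnn[of undefined undefined] FC[of undefined undefined] by linarith
  have Mdef: "M = (\<lambda>x. \<integral>x0. q x0 * F x0 x \<partial>lborel)"
    unfolding M_def F_def by (simp add: fun_eq_iff marg_def)
  have qF_le: "(\<integral>\<^sup>+x0. ennreal (q x0 * F x0 x) \<partial>lborel) \<le> ennreal C" for x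
  proof -
    have "(\<integral>\<^sup>+x0. ennreal (q x0 * F x0 x) \<partial>lborel) \<le> (\<integral>\<^sup>+x0. ennreal C * ennreal (q x0) \<partial>lborel)"
    proof (intro nn_integral_mono)
      fix x0
      have "q x0 * F x0 x \<le> C * q x0"
        using mult_left_mono[OF FC qnn] by (simp add: mult.commute)
      then show "ennreal (q x0 * F x0 x) \<le> ennreal C * ennreal (q x0)"
        using C0 qnn by (simp add: ennreal_mult[symmetric] ennreal_leI)
    qed
    also have "\<dots> = ennreal C" by (subst nn_integral_cmult) (auto simp: q1)
    finally show ?thesis .
  qed
  have Meq: "ennreal (M x) = (\<integral>\<^sup>+x0. ennreal (q x0 * F x0 x) \<partial>lborel)" for x
    unfolding Mdef
  proof (rule int_as_nn)
    show "(\<lambda>x0. q x0 * F x0 x) \<in> borel_measurable lborel" by measurable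
    show "0 \<le> q x0 * F x0 x" for x0 by (simp add: qnn Fnn)
    show "(\<integral>\<^sup>+x0. ennreal (q x0 * F x0 x) \<partial>lborel) < \<infinity>"
      using le_less_trans[OF qF_le ennreal_less_top] by simp
  qed
  show Mmeas: "M \<in> borel_measurable borel" unfolding Mdef by measurable
  show Mnn: "0 \<le> M x" for x unfolding Mdef by (rule integral_nonneg_AE) (simp add: qnn Fnn)
  show "(\<integral>\<^sup>+x. ennreal (M x) \<partial>lborel) = 1"
  proof -
    have "(\<integral>\<^sup>+x. ennreal (M x) \<partial>lborel) = (\<integral>\<^sup>+x. (\<integral>\<^sup>+x0. ennreal (q x0 * F x0 x) \<partial>lborel) \<partial>lborel)"
      by (simp add: Meq)
    also have "\<dots> = (\<integral>\<^sup>+x0. (\<integral>\<^sup>+x. ennreal (q x0 * F x0 x) \<partial>lborel) \<partial>lborel)"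
      by (rule lborel_pair.Fubini') measurable
    also have "\<dots> = (\<integral>\<^sup>+x0. ennreal (q x0) * (\<integral>\<^sup>+x. ennreal (F x0 x) \<partial>lborel) \<partial>lborel)"
    proof (intro nn_integral_cong)
      fix x0
      have e: "ennreal (q x0 * F x0 x) = ennreal (q x0) * ennreal (F x0 x)" for x
        by (rule ennreal_mult) (auto simp: qnn Fnn)
      show "(\<integral>\<^sup>+x. ennreal (q x0 * F x0 x) \<partial>lborel) = ennreal (q x0) * (\<integral>\<^sup>+x. ennreal (F x0 x) \<partial>lborel)"
        unfolding e by (rule nn_integral_cmult) measurable
    qed
    also have "\<dots> = 1" by (simp add: Fone q1)
    finally show ?thesis .
  qed
  have Jall: "(\<lambda>p. J (fst p) (snd p)) \<in> borel_measurable (borel \<Otimes>\<^sub>M borel)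
    \<and> (\<forall>y x. 0 \<le> J y x)
    \<and> (\<forall>x. (\<integral>\<^sup>+y. ennreal (J y x) \<partial>lborel) = ennreal (M x))
    \<and> (\<forall>x t i. ennreal (btil \<beta> n * M x) \<le> (\<integral>\<^sup>+y. ennreal (J y x * (y $ i - t)\<^sup>2) \<partial>lborel))
    \<and> (\<forall>u v i. (\<integral>\<^sup>+x. (\<integral>\<^sup>+y. ennreal (J y x * (y $ i - (u * x $ i + v))\<^sup>2) \<partial>lborel) \<partial>lborel)
          = (\<integral>\<^sup>+x0. ennreal (q x0) * ennreal (btil \<beta> n + (p - u)\<^sup>2 * bbar \<beta> n
               + ((sqrt (abar \<beta> (n - 1)) - u * sqrt (abar \<beta> n)) * x0 $ i - v)\<^sup>2) \<partial>lborel))"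
  proof (cases "n = 1")
    case True
    have Jeq: "J y x = q y * F y x" for y x
      by (simp add: J_def joint_def F_def True)
    have bt: "btil \<beta> n = 0" by (simp add: True btil_def)
    have p0: "p = 0" by (simp add: p_def True btil_def)
    show ?thesis
    proof (intro conjI allI)
      show "(\<lambda>p. J (fst p) (snd p)) \<in> borel_measurable (borel \<Otimes>\<^sub>M borel)"
        unfolding Jeq by measurable
      show "0 \<le> J y x" for y x by (simp add: Jeq qnn Fnn)
      show "(\<integral>\<^sup>+y. ennreal (J y x) \<partial>lborel) = ennreal (M x)" for x
        by (simp add: Jeq Meq)
      show "ennreal (btil \<beta> n * M x) \<le> (\<integral>\<^sup>+y. ennreal (J y x * (y $ i - t)\<^sup>2) \<partial>lborel)" for x t i
        by (simp add: bt)
    next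
      fix u v i
      have "(\<integral>\<^sup>+x. (\<integral>\<^sup>+y. ennreal (J y x * (y $ i - (u * x $ i + v))\<^sup>2) \<partial>lborel) \<partial>lborel)
          = (\<integral>\<^sup>+y. (\<integral>\<^sup>+x. ennreal (q y * F y x * (y $ i - (u * x $ i + v))\<^sup>2) \<partial>lborel) \<partial>lborel)"
        unfolding Jeq by (rule lborel_pair.Fubini') measurable
      also have "\<dots> = (\<integral>\<^sup>+y. ennreal (q y) * (\<integral>\<^sup>+x. ennreal (F y x * ((- u) * x $ i + (y $ i - v))\<^sup>2) \<partial>lborel) \<partial>lborel)"
      proof (intro nn_integral_cong)
        fix y
        have e: "ennreal (q y * F y x * (y $ i - (u * x $ i + v))\<^sup>2) = ennreal (q y) * ennreal (F y x * ((- u) * x $ i + (y $ i - v))\<^sup>2)" for x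
          by (subst ennreal_mult[symmetric]) (auto simp: qnn Fnn algebra_simps)
        show "(\<integral>\<^sup>+x. ennreal (q y * F y x * (y $ i - (u * x $ i + v))\<^sup>2) \<partial>lborel)
           = ennreal (q y) * (\<integral>\<^sup>+x. ennreal (F y x * ((- u) * x $ i + (y $ i - v))\<^sup>2) \<partial>lborel)"
          unfolding e by (rule nn_integral_cmult) measurable
      qed
      also have "\<dots> = (\<integral>\<^sup>+x0. ennreal (q x0) * ennreal (btil \<beta> n + (p - u)\<^sup>2 * bbar \<beta> n
               + ((sqrt (abar \<beta> (n - 1)) - u * sqrt (abar \<beta> n)) * x0 $ i - v)\<^sup>2) \<partial>lborel)"
        unfolding Fmom bt p0 by (intro nn_integral_cong) (simp add: True algebra_simps)
      finally show "(\<integral>\<^sup>+x. (\<integral>\<^sup>+y. ennreal (J y x * (y $ i - (u * x $ i + v))\<^sup>2) \<partial>lborel) \<partial>lborel)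
          = (\<integral>\<^sup>+x0. ennreal (q x0) * ennreal (btil \<beta> n + (p - u)\<^sup>2 * bbar \<beta> n
               + ((sqrt (abar \<beta> (n - 1)) - u * sqrt (abar \<beta> n)) * x0 $ i - v)\<^sup>2) \<partial>lborel)" .
    qed
  next
    case False
    then have n2: "2 \<le> n" "n \<le> N" using n by auto
    have s: "0 < btil \<beta> n" using btil_pos n2 by simp
    define K where "K x x0 y = gauss_dens (mu_til \<beta> n x x0) (btil \<beta> n) (y::real^'d)" for x x0 y :: "real^'d"
    have Jeq: "J y x = (\<integral>x0. q x0 * F x0 x * K x x0 y \<partial>lborel)" for y x
      using False by (simp add: J_def joint_def F_def K_def)
    define C' where "C' = (2 * pi * btil \<beta> n) powr (- real CARD('d) / 2)"
    have KC: "K x x0 y \<le> C'" for x x0 y using gauss_le[OF s] by (simp add: K_def C'_def)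
    have Knn: "0 \<le> K x x0 y" for x x0 y by (simp add: K_def gauss_nonneg)
    have C'0: "0 \<le> C'" by (simp add: C'_def)
    have qFK_le: "(\<integral>\<^sup>+x0. ennreal (q x0 * F x0 x * K x x0 y) \<partial>lborel) \<le> ennreal (C * C')" for x y
    proof -
      have "(\<integral>\<^sup>+x0. ennreal (q x0 * F x0 x * K x x0 y) \<partial>lborel) \<le> (\<integral>\<^sup>+x0. ennreal (C * C') * ennreal (q x0) \<partial>lborel)"
      proof (intro nn_integral_mono)
        fix x0
        have "F x0 x * K x x0 y \<le> C * C'"
          using mult_mono[OF FC KC C0 Knn] by simp
        from this have "q x0 * (F x0 x * K x x0 y) \<le> q x0 * (C * C')"
          by (rule mult_left_mono) (simp add: qnn)
        then have h: "q x0 * F x0 x * K x x0 y \<le> C * C' * q x0" by (simp add: ac_simps)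
        have "ennreal (C * C') * ennreal (q x0) = ennreal (C * C' * q x0)"
          using C0 C'0 qnn by (simp add: ennreal_mult[symmetric])
        then show "ennreal (q x0 * F x0 x * K x x0 y) \<le> ennreal (C * C') * ennreal (q x0)"
          using h by (simp add: ennreal_leI)
      qed
      also have "\<dots> = ennreal (C * C')" by (subst nn_integral_cmult) (auto simp: q1)
      finally show ?thesis .
    qed
    have JeqN: "ennreal (J y x) = (\<integral>\<^sup>+x0. ennreal (q x0 * F x0 x * K x x0 y) \<partial>lborel)" for y x
      unfolding Jeq
    proof (rule int_as_nn)
      show "(\<lambda>x0. q x0 * F x0 x * K x x0 y) \<in> borel_measurable lborel"
        unfolding K_def mu_til_def by measurable
      show "0 \<le> q x0 * F x0 x * K x x0 y" for x0 by (simp add: qnn Fnn Knn)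
      show "(\<integral>\<^sup>+x0. ennreal (q x0 * F x0 x * K x x0 y) \<partial>lborel) < \<infinity>"
        using le_less_trans[OF qFK_le ennreal_less_top] by simp
    qed
    have Jnn: "0 \<le> J y x" for y x
      unfolding Jeq by (rule integral_nonneg_AE) (simp add: qnn Fnn Knn)
    have Jphi: "(\<integral>\<^sup>+y. ennreal (J y x * \<phi> y) \<partial>lborel)
        = (\<integral>\<^sup>+x0. ennreal (q x0 * F x0 x) * (\<integral>\<^sup>+y. ennreal (K x x0 y * \<phi> y) \<partial>lborel) \<partial>lborel)"
      if phim[measurable]: "\<phi> \<in> borel_measurable borel" and phinn: "\<And>y. 0 \<le> \<phi> y" for x \<phi>
    proof -
      have "(\<integral>\<^sup>+y. ennreal (J y x * \<phi> y) \<partial>lborel)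
          = (\<integral>\<^sup>+y. (\<integral>\<^sup>+x0. ennreal (q x0 * F x0 x * K x x0 y) \<partial>lborel) * ennreal (\<phi> y) \<partial>lborel)"
        by (intro nn_integral_cong) (simp add: ennreal_mult[symmetric] Jnn phinn JeqN[symmetric])
      also have "\<dots> = (\<integral>\<^sup>+y. (\<integral>\<^sup>+x0. ennreal (q x0 * F x0 x * K x x0 y * \<phi> y) \<partial>lborel) \<partial>lborel)"
      proof (intro nn_integral_cong)
        fix y
        have e: "ennreal (q x0 * F x0 x * K x x0 y * \<phi> y) = ennreal (q x0 * F x0 x * K x x0 y) * ennreal (\<phi> y)" for x0
          by (rule ennreal_mult) (auto simp: qnn Fnn Knn phinn)
        show "(\<integral>\<^sup>+x0. ennreal (q x0 * F x0 x * K x x0 y) \<partial>lborel) * ennreal (\<phi> y)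
            = (\<integral>\<^sup>+x0. ennreal (q x0 * F x0 x * K x x0 y * \<phi> y) \<partial>lborel)"
          unfolding e by (rule nn_integral_multc[symmetric]) (unfold K_def mu_til_def, measurable)
      qed
      also have "\<dots> = (\<integral>\<^sup>+x0. (\<integral>\<^sup>+y. ennreal (q x0 * F x0 x * K x x0 y * \<phi> y) \<partial>lborel) \<partial>lborel)"
        by (rule lborel_pair.Fubini') (unfold K_def mu_til_def, measurable)
      also have "\<dots> = (\<integral>\<^sup>+x0. ennreal (q x0 * F x0 x) * (\<integral>\<^sup>+y. ennreal (K x x0 y * \<phi> y) \<partial>lborel) \<partial>lborel)"
      proof (intro nn_integral_cong)
        fix x0
        have e: "ennreal (q x0 * F x0 x * K x x0 y * \<phi> y) = ennreal (q x0 * F x0 x) * ennreal (K x x0 y * \<phi> y)" for y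
          by (subst ennreal_mult[symmetric]) (auto simp: qnn Fnn Knn phinn mult.assoc)
        show "(\<integral>\<^sup>+y. ennreal (q x0 * F x0 x * K x x0 y * \<phi> y) \<partial>lborel)
            = ennreal (q x0 * F x0 x) * (\<integral>\<^sup>+y. ennreal (K x x0 y * \<phi> y) \<partial>lborel)"
          unfolding e by (rule nn_integral_cmult) (unfold K_def mu_til_def, measurable)
      qed
      finally show ?thesis .
    qed
    have Kmom: "(\<integral>\<^sup>+y. ennreal (K x x0 y * (y $ i - t)\<^sup>2) \<partial>lborel) = ennreal (btil \<beta> n + (mu_til \<beta> n x x0 $ i - t)\<^sup>2)"
      for x x0 i t
      using gauss_moment[OF s, of "mu_til \<beta> n x x0" 1 i "- t"] by (simp add: K_def)
    have Kone: "(\<integral>\<^sup>+y. ennreal (K x x0 y) \<partial>lborel) = 1" for x x0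
      using gauss_total[OF s] by (simp add: K_def)
    show ?thesis
    proof (intro conjI allI)
      show "(\<lambda>p. J (fst p) (snd p)) \<in> borel_measurable (borel \<Otimes>\<^sub>M borel)"
        unfolding Jeq K_def mu_til_def by measurable
      show "0 \<le> J y x" for y x by (rule Jnn)
      show "(\<integral>\<^sup>+y. ennreal (J y x) \<partial>lborel) = ennreal (M x)" for x
        using Jphi[of "\<lambda>y. 1" x] by (simp add: Kone Meq)
    next
      fix x t i
      have "(\<integral>\<^sup>+x0. ennreal (q x0 * F x0 x) * ennreal (btil \<beta> n) \<partial>lborel)
          = (\<integral>\<^sup>+x0. ennreal (q x0 * F x0 x) \<partial>lborel) * ennreal (btil \<beta> n)"
        by (rule nn_integral_multc) measurable
      also have "\<dots> = ennreal (btil \<beta> n * M x)"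
        unfolding Meq[symmetric] using s Mnn[of x] by (simp add: ennreal_mult mult.commute)
      finally have "ennreal (btil \<beta> n * M x) = (\<integral>\<^sup>+x0. ennreal (q x0 * F x0 x) * ennreal (btil \<beta> n) \<partial>lborel)" ..
      also have "\<dots> \<le> (\<integral>\<^sup>+x0. ennreal (q x0 * F x0 x) * (\<integral>\<^sup>+y. ennreal (K x x0 y * (y $ i - t)\<^sup>2) \<partial>lborel) \<partial>lborel)"
        unfolding Kmom by (intro nn_integral_mono mult_left_mono ennreal_leI) auto
      also have "\<dots> = (\<integral>\<^sup>+y. ennreal (J y x * (y $ i - t)\<^sup>2) \<partial>lborel)"
        by (rule Jphi[symmetric]) auto
      finally show "ennreal (btil \<beta> n * M x) \<le> (\<integral>\<^sup>+y. ennreal (J y x * (y $ i - t)\<^sup>2) \<partial>lborel)" .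
    next
      fix u v i
      define B' where "B' x0 = (sqrt (abar \<beta> (n - 1)) - p * sqrt (abar \<beta> n)) * x0 $ i - v" for x0 :: "real^'d"
      have mu_eq: "mu_til \<beta> n x x0 $ i - (u * x $ i + v) = (p - u) * x $ i + B' x0" for x x0
        unfolding mu_til_comp p_def[symmetric] B'_def by (simp add: algebra_simps)
      have "(\<integral>\<^sup>+x. (\<integral>\<^sup>+y. ennreal (J y x * (y $ i - (u * x $ i + v))\<^sup>2) \<partial>lborel) \<partial>lborel)
          = (\<integral>\<^sup>+x. (\<integral>\<^sup>+x0. ennreal (q x0) * ennreal (F x0 x * (btil \<beta> n + ((p - u) * x $ i + B' x0)\<^sup>2)) \<partial>lborel) \<partial>lborel)"
      proof (rule nn_integral_cong)
        fix x
        have "(\<integral>\<^sup>+y. ennreal (J y x * (y $ i - (u * x $ i + v))\<^sup>2) \<partial>lborel)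
           = (\<integral>\<^sup>+x0. ennreal (q x0 * F x0 x) * (\<integral>\<^sup>+y. ennreal (K x x0 y * (y $ i - (u * x $ i + v))\<^sup>2) \<partial>lborel) \<partial>lborel)"
          by (rule Jphi) auto
        also have "\<dots> = (\<integral>\<^sup>+x0. ennreal (q x0) * ennreal (F x0 x * (btil \<beta> n + ((p - u) * x $ i + B' x0)\<^sup>2)) \<partial>lborel)"
        proof (intro nn_integral_cong)
          fix x0
          show "ennreal (q x0 * F x0 x) * (\<integral>\<^sup>+y. ennreal (K x x0 y * (y $ i - (u * x $ i + v))\<^sup>2) \<partial>lborel)
              = ennreal (q x0) * ennreal (F x0 x * (btil \<beta> n + ((p - u) * x $ i + B' x0)\<^sup>2))"
          proof -
            have z: "0 \<le> btil \<beta> n + ((p - u) * x $ i + B' x0)\<^sup>2" using s by simp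
            have "ennreal (q x0 * F x0 x) * ennreal (btil \<beta> n + ((p - u) * x $ i + B' x0)\<^sup>2)
                = ennreal (q x0 * F x0 x * (btil \<beta> n + ((p - u) * x $ i + B' x0)\<^sup>2))"
              using z by (intro ennreal_mult[symmetric]) (auto simp: qnn Fnn)
            also have "\<dots> = ennreal (q x0) * ennreal (F x0 x * (btil \<beta> n + ((p - u) * x $ i + B' x0)\<^sup>2))"
              using z by (subst ennreal_mult[symmetric]) (auto simp: qnn Fnn mult.assoc)
            finally have X: "ennreal (q x0 * F x0 x) * ennreal (btil \<beta> n + ((p - u) * x $ i + B' x0)\<^sup>2)
                = ennreal (q x0) * ennreal (F x0 x * (btil \<beta> n + ((p - u) * x $ i + B' x0)\<^sup>2))" .
            show ?thesis by (simp only: Kmom mu_eq X)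
          qed
        qed
        finally show "(\<integral>\<^sup>+y. ennreal (J y x * (y $ i - (u * x $ i + v))\<^sup>2) \<partial>lborel)
           = (\<integral>\<^sup>+x0. ennreal (q x0) * ennreal (F x0 x * (btil \<beta> n + ((p - u) * x $ i + B' x0)\<^sup>2)) \<partial>lborel)" .
      qed
      also have "\<dots> = (\<integral>\<^sup>+x0. (\<integral>\<^sup>+x. ennreal (q x0) * ennreal (F x0 x * (btil \<beta> n + ((p - u) * x $ i + B' x0)\<^sup>2)) \<partial>lborel) \<partial>lborel)"
        by (rule lborel_pair.Fubini') (unfold B'_def, measurable)
      also have "\<dots> = (\<integral>\<^sup>+x0. ennreal (q x0) * ennreal (btil \<beta> n + (p - u)\<^sup>2 * bbar \<beta> n
               + ((sqrt (abar \<beta> (n - 1)) - u * sqrt (abar \<beta> n)) * x0 $ i - v)\<^sup>2) \<partial>lborel)"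
      proof (intro nn_integral_cong)
        fix x0
        have ms: "(\<integral>\<^sup>+x. ennreal (F x0 x * (btil \<beta> n + ((p - u) * x $ i + B' x0)\<^sup>2)) \<partial>lborel)
            = ennreal (btil \<beta> n + (p - u)\<^sup>2 * bbar \<beta> n + ((p - u) * (sqrt (abar \<beta> n) * x0 $ i) + B' x0)\<^sup>2)"
        proof (rule mom_shift)
          show "(\<lambda>x. F x0 x) \<in> borel_measurable lborel" by measurable
          show "0 \<le> F x0 x" for x by (rule Fnn)
          show "(\<integral>\<^sup>+x. ennreal (F x0 x * (A * x $ i + B)\<^sup>2) \<partial>lborel)
              = ennreal (A\<^sup>2 * bbar \<beta> n + (A * (sqrt (abar \<beta> n) * x0 $ i) + B)\<^sup>2)" for A B
            using Fmom[of x0 A i B] by (simp add: mult.assoc)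
          show "0 \<le> btil \<beta> n" using s by simp
          show "0 \<le> bbar \<beta> n" using bbar_nn n2 by simp
        qed
        have e2: "(p - u) * (sqrt (abar \<beta> n) * x0 $ i) + B' x0 = (sqrt (abar \<beta> (n - 1)) - u * sqrt (abar \<beta> n)) * x0 $ i - v"
          by (simp add: B'_def algebra_simps)
        show "(\<integral>\<^sup>+x. ennreal (q x0) * ennreal (F x0 x * (btil \<beta> n + ((p - u) * x $ i + B' x0)\<^sup>2)) \<partial>lborel)
            = ennreal (q x0) * ennreal (btil \<beta> n + (p - u)\<^sup>2 * bbar \<beta> n
               + ((sqrt (abar \<beta> (n - 1)) - u * sqrt (abar \<beta> n)) * x0 $ i - v)\<^sup>2)"
          by (subst nn_integral_cmult) (measurable, simp add: ms e2)
      qed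
      finally show "(\<integral>\<^sup>+x. (\<integral>\<^sup>+y. ennreal (J y x * (y $ i - (u * x $ i + v))\<^sup>2) \<partial>lborel) \<partial>lborel)
          = (\<integral>\<^sup>+x0. ennreal (q x0) * ennreal (btil \<beta> n + (p - u)\<^sup>2 * bbar \<beta> n
               + ((sqrt (abar \<beta> (n - 1)) - u * sqrt (abar \<beta> n)) * x0 $ i - v)\<^sup>2) \<partial>lborel)" .
    qed
  qed
  then show "(\<lambda>p. J (fst p) (snd p)) \<in> borel_measurable (borel \<Otimes>\<^sub>M borel)"
    and "\<And>y x. 0 \<le> J y x"
    and "\<And>x. (\<integral>\<^sup>+y. ennreal (J y x) \<partial>lborel) = ennreal (M x)"
    and "\<And>x t i. ennreal (btil \<beta> n * M x) \<le> (\<integral>\<^sup>+y. ennreal (J y x * (y $ i - t)\<^sup>2) \<partial>lborel)"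
    and "\<And>u v i. (\<integral>\<^sup>+x. (\<integral>\<^sup>+y. ennreal (J y x * (y $ i - (u * x $ i + v))\<^sup>2) \<partial>lborel) \<partial>lborel)
          = (\<integral>\<^sup>+x0. ennreal (q x0) * ennreal (btil \<beta> n + (p - u)\<^sup>2 * bbar \<beta> n
               + ((sqrt (abar \<beta> (n - 1)) - u * sqrt (abar \<beta> n)) * x0 $ i - v)\<^sup>2) \<partial>lborel)"
    by blast+
qed

end


theorem corollary3:
  fixes q :: "real^'d \<Rightarrow> real" and \<beta> :: "nat \<Rightarrow> real" and N n :: nat and a b :: real
  assumes "N \<ge> 1"
    and "\<And>k. k \<in> {1..N} \<Longrightarrow> 0 < \<beta> k \<and> \<beta> k < 1"
    and "q \<in> borel_measurable lborel"
    and "\<And>x. 0 \<le> q x"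
    and "integrable lborel q" and "(\<integral>x. q x \<partial>lborel) = 1"
    and "integrable lborel (\<lambda>x. q x * (norm x)\<^sup>2)"
    and "n \<in> {1..N}"
  shows "btil \<beta> n \<le> sigma_opt q \<beta> N n \<and> sigma_opt q \<beta> N n \<le> \<beta> n / alpha \<beta> n
    \<and> ((AE x in lborel. q x \<noteq> 0 \<longrightarrow> (\<forall>i. a \<le> x $ i \<and> x $ i \<le> b)) \<longrightarrow>
        sigma_opt q \<beta> N n
          \<le> btil \<beta> n + abar \<beta> (n - 1) * (\<beta> n)\<^sup>2 / (bbar \<beta> n)\<^sup>2 * ((b - a) / 2)\<^sup>2)"
proof -
  interpret sched \<beta> N using assms(2) by unfold_locales
  have n: "n \<in> {1..N}" by (rule assms(8))
  have qm[measurable]: "q \<in> borel_measurable borel" using assms(3) by simp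
  have qnn: "\<And>x. 0 \<le> q x" by (rule assms(4))
  have q1: "(\<integral>\<^sup>+x. ennreal (q x) \<partial>lborel) = 1"
    using nn_integral_eq_integral[OF assms(5)] assms(4,6) by simp
  define J where "J = (\<lambda>y x. joint q \<beta> N n y x)"
  define M where "M = marg q \<beta> N n"
  define p where "p = sqrt (bbar \<beta> (n - 1) - btil \<beta> n) / sqrt (bbar \<beta> n)"
  note mf = main_facts[OF n qm qnn q1, folded J_def M_def p_def]
  note Jraw[measurable (raw)] = meas_raw[OF mf(1)]
  have Mm[measurable]: "M \<in> borel_measurable borel" by (rule mf(2))
  define d where "d = real CARD('d)"
  have S_eq: "sigma_opt q \<beta> N n = (\<integral>x. M x * (\<Sum>i\<in>UNIV. \<integral>y. J y x / M x * (y $ i - (\<chi> i. \<integral>y. J y x / M x * y $ i \<partial>lborel) $ i)\<^sup>2 \<partial>lborel) \<partial>lborel)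
                / real CARD('d)"
    unfolding sigma_opt_def rev_cov_tr_def rev_mean_def rev_cond_def J_def M_def ..
  have Tsum: "(\<integral>\<^sup>+x. (\<Sum>i\<in>UNIV. \<integral>\<^sup>+y. ennreal (J y x * (y $ i - (u * x $ i + v))\<^sup>2) \<partial>lborel) \<partial>lborel)
     = (\<Sum>i\<in>UNIV. \<integral>\<^sup>+x0. ennreal (q x0) * ennreal (btil \<beta> n + (p - u)\<^sup>2 * bbar \<beta> n
               + ((sqrt (abar \<beta> (n - 1)) - u * sqrt (abar \<beta> n)) * x0 $ i - v)\<^sup>2) \<partial>lborel)" for u v
    by (subst nn_integral_sum) (measurable, simp add: mf(8))
  have bt0: "0 \<le> btil \<beta> n" using btil_nn n by auto
  have bb0: "0 \<le> bbar \<beta> n" using bbar_nn n by auto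
  have al0: "0 < alpha \<beta> n" using alpha_pos n by auto
  note asm = assembly[where J=J and M=M, OF mf(1) Mm mf(3) mf(4) mf(5) mf(6), folded S_eq]
  have low: "\<forall>x t i. ennreal (btil \<beta> n * M x) \<le> (\<integral>\<^sup>+y. ennreal (J y x * (y $ i - t)\<^sup>2) \<partial>lborel)"
    using mf(7) by blast
  define u1 where "u1 = 1 / sqrt (alpha \<beta> n)"
  have b1: "btil \<beta> n + (p - u1)\<^sup>2 * bbar \<beta> n = \<beta> n / alpha \<beta> n"
    "sqrt (abar \<beta> (n - 1)) - u1 * sqrt (abar \<beta> n) = 0"
    using bound1_alg[OF n] by (simp_all add: u1_def p_def)
  have U1: "0 \<le> \<beta> n / alpha \<beta> n" using hb[of n] n al0 by simp
  have Ub1: "(\<integral>\<^sup>+x. (\<Sum>i\<in>UNIV. \<integral>\<^sup>+y. ennreal (J y x * (y $ i - (u1 * x $ i + 0))\<^sup>2) \<partial>lborel) \<partial>lborel)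
      \<le> ennreal (real CARD('d) * (\<beta> n / alpha \<beta> n))"
  proof -
    have e1: "(\<integral>\<^sup>+x0. ennreal (q x0) * ennreal (btil \<beta> n + (p - u1)\<^sup>2 * bbar \<beta> n
               + ((sqrt (abar \<beta> (n - 1)) - u1 * sqrt (abar \<beta> n)) * x0 $ i - 0)\<^sup>2) \<partial>lborel)
        = ennreal (\<beta> n / alpha \<beta> n)" for i
      unfolding b1 by (simp add: nn_integral_multc q1)
    have "(\<integral>\<^sup>+x. (\<Sum>i\<in>UNIV. \<integral>\<^sup>+y. ennreal (J y x * (y $ i - (u1 * x $ i + 0))\<^sup>2) \<partial>lborel) \<partial>lborel)
        = (\<Sum>i\<in>(UNIV::'d set). ennreal (\<beta> n / alpha \<beta> n))"
      unfolding Tsum e1 ..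
    also have "\<dots> = ennreal (\<Sum>i\<in>(UNIV::'d set). \<beta> n / alpha \<beta> n)"
      by (rule sum_ennreal) (use U1 in auto)
    also have "(\<Sum>i\<in>(UNIV::'d set). \<beta> n / alpha \<beta> n) = real CARD('d) * (\<beta> n / alpha \<beta> n)" by simp
    finally show ?thesis by simp
  qed
  have r1: "sigma_opt q \<beta> N n \<le> \<beta> n / alpha \<beta> n \<and> btil \<beta> n \<le> sigma_opt q \<beta> N n"
    using asm[where c="\<lambda>i x. u1 * x $ i + 0" and U="\<beta> n / alpha \<beta> n" and L="btil \<beta> n", OF _ U1 Ub1] low
    by auto
  define g where "g = sqrt (abar \<beta> (n - 1)) - p * sqrt (abar \<beta> n)"
  define m0 where "m0 = (a + b) / 2"
  define U2 where "U2 = btil \<beta> n + g\<^sup>2 * ((b - a) / 2)\<^sup>2"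
  have U2: "0 \<le> U2" using bt0 by (simp add: U2_def)
  have U2eq: "U2 = btil \<beta> n + abar \<beta> (n - 1) * (\<beta> n)\<^sup>2 / (bbar \<beta> n)\<^sup>2 * ((b - a) / 2)\<^sup>2"
    using bound2_alg[OF n] by (simp add: U2_def g_def p_def)
  have r2: "sigma_opt q \<beta> N n \<le> U2"
    if AEb: "AE x in lborel. q x \<noteq> 0 \<longrightarrow> (\<forall>i. a \<le> x $ i \<and> x $ i \<le> b)"
  proof -
    have each: "(\<integral>\<^sup>+x0. ennreal (q x0) * ennreal (btil \<beta> n + (p - p)\<^sup>2 * bbar \<beta> n
               + ((sqrt (abar \<beta> (n - 1)) - p * sqrt (abar \<beta> n)) * x0 $ i - g * m0)\<^sup>2) \<partial>lborel) \<le> ennreal U2" for i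
    proof -
      have "(\<integral>\<^sup>+x0. ennreal (q x0) * ennreal (btil \<beta> n + (p - p)\<^sup>2 * bbar \<beta> n
               + ((sqrt (abar \<beta> (n - 1)) - p * sqrt (abar \<beta> n)) * x0 $ i - g * m0)\<^sup>2) \<partial>lborel)
          \<le> (\<integral>\<^sup>+x0. ennreal (q x0) * ennreal U2 \<partial>lborel)"
      proof (rule nn_integral_mono_AE)
        show "AE x0 in lborel. ennreal (q x0) * ennreal (btil \<beta> n + (p - p)\<^sup>2 * bbar \<beta> n
               + ((sqrt (abar \<beta> (n - 1)) - p * sqrt (abar \<beta> n)) * x0 $ i - g * m0)\<^sup>2)
             \<le> ennreal (q x0) * ennreal U2"
          using AEb
        proof eventually_elim
          case (elim x0)
          show ?case
          proof (cases "q x0 = 0")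
            case True then show ?thesis by simp
          next
            case False
            then have ab: "a \<le> x0 $ i" "x0 $ i \<le> b" using elim by auto
            have "\<bar>x0 $ i - m0\<bar> \<le> (b - a) / 2" using ab unfolding m0_def abs_le_iff by (intro conjI) (simp_all add: field_simps)
            then have "(x0 $ i - m0)\<^sup>2 \<le> ((b - a) / 2)\<^sup>2"
              by (metis abs_le_square_iff abs_of_nonneg abs_ge_zero order_trans power2_abs)
            then have "g\<^sup>2 * (x0 $ i - m0)\<^sup>2 \<le> g\<^sup>2 * ((b - a) / 2)\<^sup>2" by (rule mult_left_mono) simp
            then have "btil \<beta> n + (p - p)\<^sup>2 * bbar \<beta> n + ((sqrt (abar \<beta> (n - 1)) - p * sqrt (abar \<beta> n)) * x0 $ i - g * m0)\<^sup>2 \<le> U2"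
            proof -
              have ge: "(sqrt (abar \<beta> (n - 1)) - p * sqrt (abar \<beta> n)) * x0 $ i - g * m0 = g * (x0 $ i - m0)"
                by (simp add: g_def algebra_simps)
              show ?thesis unfolding ge U2_def using \<open>g\<^sup>2 * (x0 $ i - m0)\<^sup>2 \<le> g\<^sup>2 * ((b - a) / 2)\<^sup>2\<close>
                by (simp add: power_mult_distrib)
            qed
            then show ?thesis by (intro mult_left_mono ennreal_leI) auto
          qed
        qed
      qed
      also have "\<dots> = ennreal U2" by (simp add: nn_integral_multc q1)
      finally show ?thesis .
    qed
    have Ub2: "(\<integral>\<^sup>+x. (\<Sum>i\<in>UNIV. \<integral>\<^sup>+y. ennreal (J y x * (y $ i - (p * x $ i + g * m0))\<^sup>2) \<partial>lborel) \<partial>lborel)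
      \<le> ennreal (real CARD('d) * U2)"
    proof -
      have "(\<integral>\<^sup>+x. (\<Sum>i\<in>UNIV. \<integral>\<^sup>+y. ennreal (J y x * (y $ i - (p * x $ i + g * m0))\<^sup>2) \<partial>lborel) \<partial>lborel)
          \<le> (\<Sum>i\<in>(UNIV::'d set). ennreal U2)"
        unfolding Tsum by (intro sum_mono each)
      also have "\<dots> = ennreal (\<Sum>i\<in>(UNIV::'d set). U2)"
        by (rule sum_ennreal) (use U2 in auto)
      also have "(\<Sum>i\<in>(UNIV::'d set). U2) = real CARD('d) * U2" by simp
      finally show ?thesis .
    qed
    show ?thesis
      using asm[where c="\<lambda>i x. p * x $ i + g * m0" and U="U2" and L="btil \<beta> n", OF _ U2 Ub2] by auto
  qed
  show ?thesis using r1 r2 U2eq by auto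
qed


end
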